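(* Assume $(A_1)$ and $(A_2)$. If $\bar x\in D$ minimizes $J$ over $D$, i.e. $\bar x$ solves $$\min\int_0^T L\big(t,x(t),x(t-\tau_1),\dot x(t),\dot x(t-\tau_2)\big)dt\quad\text{subject to } x|_{I_1}=\theta_1,\ x|_{I_2}=\theta_2,\ x(T)=\alpha,\ x\in\mathcal{H},$$ then, writing $\partial_iL[\bar x](t)=\partial_iL\big(t,\bar x(t),\bar x(t-\tau_1),\dot{\bar x}(t),\dot{\bar x}(t-\tau_2)\big)$, $$\begin{cases}\frac{d}{dt}\big\{\partial_4L[\bar x](t)+\partial_5L[\bar x](t+\tau_2)\big\}=\partial_2L[\bar x](t)+\partial_3L[\bar x](t+\tau_1), & \text{a.e. } t\in[0,T-\tau_1],\\[2pt] \frac{d}{dt}\big\{\partial_4L[\bar x](t)+\partial_5L[\bar x](t+\tau_2)\big\}=\partial_2L[\bar x](t), & \text{a.e. } t\in\,]T-\tau_1,T-\tau_2],\\[2pt] \frac{d}{dt}\partial_4L[\bar x](t)=\partial_2L[\bar x](t), & \text{a.e. } t\in\,]T-\tau_2,T].\end{cases}$$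
   Context: Fix $N\ge 1$, $T>0$ and $0<\tau_2<\tau_1<T$; $I=[0,T]$, $I_1=[-\tau_1,-\tau_2]$, $I_2=[-\tau_2,0]$. $\mathcal{H}$ is the Hilbert space of functions $x:[-\tau_1,T]\to\mathbb{R}^N$ with $x|_{I_1}\in L^2(I_1,\mathbb{R}^N)$, $x|_{I_2}\in H^1(I_2,\mathbb{R}^N)$, $x|_I\in H^1(I,\mathbb{R}^N)$, normed by $\|x\|_{\mathcal{H}}=\big(\|x|_{I_1}\|^2_{L^2}+\|x|_{I_2}\|^2_{H^1}+\|x|_I\|^2_{H^1}\big)^{1/2}$. $\theta_1:I_1\to\mathbb{R}^N$, $\theta_2:I_2\to\mathbb{R}^N$ are given piecewise smooth functions, $\alpha\in\mathbb{R}^N$, and $D=\{x\in\mathcal{H}: x|_{I_1}=\theta_1,\ x|_{I_2}=\theta_2,\ x(T)=\alpha\}$. $J(x)=\int_0^T L(t,x(t),x(t-\tau_1),\dot x(t),\dot x(t-\tau_2))dt$. The Lagrangian is $L:[0,T]\times\mathbb{R}^{4N}\to\mathbb{R}$, $(t,a,\bar a,b,\bar b)\mapsto L(t,a,\bar a,b,\bar b)$; $\partial_iL$ is its partial derivative with respect to its $i$-th argument. Assumptions: $(A_1)$ $L$ is $C^1$ in $(a,\bar a,b,\bar b)$ for a.e. $t$ and measurable in $t$ for every $(a,\bar a,b,\bar b)$; $(A_2)$ there exist $\gamma_i\in L^2(I,\mathbb{R}^+)$, $i=1,\dots,5$, with $|L|\le\gamma_1(t)$ and $\|\partial_iL\|\le\gamma_i(t)$,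 $i=2,\dots,5$, for a.e. $t\in I$ and all arguments. Derivatives $\frac{d}{dt}$ are understood in the weak sense, the equations holding almost everywhere. *)

theory Defs
  imports "HOL-Analysis.Analysis"
begin

definition L2_on :: "real set \<Rightarrow> (real \<Rightarrow> 'a::euclidean_space) \<Rightarrow> bool" where
  "L2_on S f \<longleftrightarrow> f \<in> borel_measurable (lebesgue_on S)
      \<and> integrable (lebesgue_on S) (\<lambda>t. (norm (f t))^2)"

definition test_function :: "real \<Rightarrow> real \<Rightarrow> (real \<Rightarrow> real) \<Rightarrow> bool" where
  "test_function a b \<phi> \<longleftrightarrow>
     (\<forall>k t. ((deriv ^^ k) \<phi>) differentiable (at t))
     \<and> (\<exists>c d. a < c \<and> c \<le> d \<and> d < b \<and> (\<forall>t. t \<notin> {c..d} \<longrightarrow> \<phi> t = 0))"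

definition has_weak_deriv_on ::
  "real \<Rightarrow> real \<Rightarrow> (real \<Rightarrow> 'a::euclidean_space) \<Rightarrow> (real \<Rightarrow> 'a) \<Rightarrow> bool" where
  "has_weak_deriv_on a b f g \<longleftrightarrow>
     (\<forall>c d. a < c \<and> d < b \<longrightarrow> set_integrable lebesgue {c..d} f \<and> set_integrable lebesgue {c..d} g)
     \<and> (\<forall>\<phi>. test_function a b \<phi> \<longrightarrow>
          (LINT t:{a<..<b}|lebesgue. deriv \<phi> t *\<^sub>R f t)
          = - (LINT t:{a<..<b}|lebesgue. \<phi> t *\<^sub>R g t))"

text \<open>H^1 on [a,b], elements identified with their continuous representative.\<close>
definition H1_on :: "real \<Rightarrow> real \<Rightarrow> (real \<Rightarrow> 'a::euclidean_space) \<Rightarrow> bool" where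
  "H1_on a b x \<longleftrightarrow> continuous_on {a..b} x \<and> L2_on {a..b} x
      \<and> (\<exists>g. L2_on {a..b} g \<and> has_weak_deriv_on a b x g)"

text \<open>The space \<H>: L^2 on I1 = [-tau1,-tau2], H^1 on I2 = [-tau2,0] and on I = [0,T].\<close>
definition HH :: "real \<Rightarrow> real \<Rightarrow> real \<Rightarrow> (real \<Rightarrow> 'a::euclidean_space) \<Rightarrow> bool" where
  "HH \<tau>1 \<tau>2 T x \<longleftrightarrow> L2_on {-\<tau>1..-\<tau>2} x \<and> H1_on (-\<tau>2) 0 x \<and> H1_on 0 T x"

definition is_xdot :: "real \<Rightarrow> real \<Rightarrow> (real \<Rightarrow> 'a::euclidean_space) \<Rightarrow> (real \<Rightarrow> 'a) \<Rightarrow> bool" where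
  "is_xdot \<tau>2 T x xd \<longleftrightarrow> has_weak_deriv_on (-\<tau>2) 0 x xd \<and> has_weak_deriv_on 0 T x xd"

definition Dset :: "real \<Rightarrow> real \<Rightarrow> real \<Rightarrow> (real \<Rightarrow> 'a::euclidean_space) \<Rightarrow> (real \<Rightarrow> 'a)
    \<Rightarrow> 'a \<Rightarrow> (real \<Rightarrow> 'a) set" where
  "Dset \<tau>1 \<tau>2 T \<theta>1 \<theta>2 \<alpha> = {x. HH \<tau>1 \<tau>2 T x
      \<and> (\<forall>t\<in>{-\<tau>1..<-\<tau>2}. x t = \<theta>1 t) \<and> (\<forall>t\<in>{-\<tau>2..0}. x t = \<theta>2 t) \<and> x T = \<alpha>}"

text \<open>The functional J, evaluated with a (weak) derivative xd of x.\<close>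
definition Jfun :: "(real \<Rightarrow> 'a \<Rightarrow> 'a \<Rightarrow> 'a \<Rightarrow> 'a \<Rightarrow> real) \<Rightarrow> real \<Rightarrow> real \<Rightarrow> real
    \<Rightarrow> (real \<Rightarrow> 'a::euclidean_space) \<Rightarrow> (real \<Rightarrow> 'a) \<Rightarrow> real" where
  "Jfun L \<tau>1 \<tau>2 T x xd = (LINT t:{0..T}|lebesgue. L t (x t) (x (t - \<tau>1)) (xd t) (xd (t - \<tau>2)))"

text \<open>A function of the Lagrangian's arguments evaluated along (x, xd): F[x](t).\<close>
definition along :: "(real \<Rightarrow> 'a \<Rightarrow> 'a \<Rightarrow> 'a \<Rightarrow> 'a \<Rightarrow> 'b) \<Rightarrow> real \<Rightarrow> real
    \<Rightarrow> (real \<Rightarrow> 'a) \<Rightarrow> (real \<Rightarrow> 'a) \<Rightarrow> real \<Rightarrow> 'b" where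
  "along F \<tau>1 \<tau>2 x xd t = F t (x t) (x (t - \<tau>1)) (xd t) (xd (t - \<tau>2))"

end

theory Submission
  imports Defs
begin


lemma bm_on_iff:
  fixes f :: "real \<Rightarrow> 'b::euclidean_space"
  assumes "S \<in> sets lebesgue"
  shows "f \<in> borel_measurable (lebesgue_on S) \<longleftrightarrow> (\<lambda>x. indicator S x *\<^sub>R f x) \<in> borel_measurable lebesgue"
  by (rule borel_measurable_restrict_space_iff) (use assms in auto)

lemma bm_on_AE:
  fixes f g :: "real \<Rightarrow> 'b::euclidean_space"
  assumes S: "S \<in> sets lebesgue" and f: "f \<in> borel_measurable (lebesgue_on S)"
    and ae: "AE x in lebesgue_on S. f x = g x"
  shows "g \<in> borel_measurable (lebesgue_on S)"
proof -
  have "AE x in lebesgue. x \<in> S \<longrightarrow> f x = g x"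
    using ae by (subst (asm) AE_restrict_space_iff) (use S in auto)
  then have "AE x in lebesgue. indicator S x *\<^sub>R f x = indicator S x *\<^sub>R g x"
    by eventually_elim (auto simp: indicator_def)
  then show ?thesis
    using borel_measurable_AE[OF bm_on_iff[OF S, THEN iffD1, OF f]] bm_on_iff[OF S, of g] by simp
qed

lemma bm_on_AE_lim:
  fixes f :: "nat \<Rightarrow> real \<Rightarrow> 'b::euclidean_space"
  assumes S: "S \<in> sets lebesgue" and f: "\<And>i. f i \<in> borel_measurable (lebesgue_on S)"
    and ae: "AE x in lebesgue_on S. (\<lambda>i. f i x) \<longlonglongrightarrow> g x"
  shows "g \<in> borel_measurable (lebesgue_on S)"
proof (rule bm_on_AE[OF S])
  show "(\<lambda>x. lim (\<lambda>i. f i x)) \<in> borel_measurable (lebesgue_on S)"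
    using f by (rule borel_measurable_lim_metric)
  show "AE x in lebesgue_on S. lim (\<lambda>i. f i x) = g x"
    using ae by eventually_elim (rule limI)
qed

lemma bm_on_subset:
  fixes f :: "real \<Rightarrow> 'b::euclidean_space"
  assumes "f \<in> borel_measurable (lebesgue_on S)" "A \<subseteq> S"
  shows "f \<in> borel_measurable (lebesgue_on A)"
  using measurable_restrict_mono assms by blast

lemma bm_on_Un:
  fixes f :: "real \<Rightarrow> 'b::euclidean_space"
  assumes S: "S \<in> sets lebesgue" and A: "A \<in> sets lebesgue"
    and f1: "f \<in> borel_measurable (lebesgue_on S)" and f2: "f \<in> borel_measurable (lebesgue_on A)"
  shows "f \<in> borel_measurable (lebesgue_on (S \<union> A))"
proof -
  have m1: "(\<lambda>x. indicator S x *\<^sub>R f x) \<in> borel_measurable lebesgue"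
    using bm_on_iff[OF S] f1 by blast
  have m2: "(\<lambda>x. indicator A x *\<^sub>R f x) \<in> borel_measurable lebesgue"
    using bm_on_iff[OF A] f2 by blast
  have D: "A - S \<in> sets lebesgue" using A S by auto
  have "(\<lambda>x. indicator S x *\<^sub>R f x + indicator (A - S) x *\<^sub>R (indicator A x *\<^sub>R f x)) \<in> borel_measurable lebesgue"
    by (rule borel_measurable_add[OF m1 borel_measurable_scaleR[OF borel_measurable_indicator[OF D] m2]])
  moreover have "(\<lambda>x. indicator S x *\<^sub>R f x + indicator (A - S) x *\<^sub>R (indicator A x *\<^sub>R f x))
      = (\<lambda>x. indicator (S \<union> A) x *\<^sub>R f x)"
    by (auto simp: indicator_def)
  moreover have "S \<union> A \<in> sets lebesgue" using S A by auto
  ultimately show ?thesis using bm_on_iff[of "S \<union> A" f] by simp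
qed

lemma bm_on_shift:
  fixes f :: "real \<Rightarrow> 'b::euclidean_space"
  assumes S: "S \<in> sets lebesgue" and S': "S' \<in> sets lebesgue"
    and f: "f \<in> borel_measurable (lebesgue_on S)" and iff: "\<And>t. t \<in> S' \<longleftrightarrow> t + c \<in> S"
  shows "(\<lambda>t. f (t + c)) \<in> borel_measurable (lebesgue_on S')"
proof -
  have "(\<lambda>x. indicator S x *\<^sub>R f x) \<in> borel_measurable lebesgue"
    using bm_on_iff[OF S] f by blast
  from borel_measurable_affine[OF this, of 1 c]
  have "(\<lambda>x. indicator S (c + x) *\<^sub>R f (c + x)) \<in> borel_measurable lebesgue" by simp
  moreover have "(\<lambda>x. indicator S (c + x) *\<^sub>R f (c + x)) = (\<lambda>x. indicator S' x *\<^sub>R f (x + c))"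
    using iff by (auto simp: indicator_def add.commute)
  ultimately show ?thesis using bm_on_iff[OF S', of "\<lambda>t. f (t + c)"] by simp
qed

lemma floor_lim: "(\<lambda>n. real_of_int \<lfloor>real (Suc n) * x\<rfloor> / real (Suc n)) \<longlonglongrightarrow> x"
proof (rule real_tendsto_sandwich[of "\<lambda>n. x - inverse (real (Suc n))" _ _ "\<lambda>n. x"])
  show "\<forall>\<^sub>F n in sequentially. x - inverse (real (Suc n)) \<le> real_of_int \<lfloor>real (Suc n) * x\<rfloor> / real (Suc n)"
  proof (intro always_eventually allI)
    fix n
    have "real (Suc n) * x - 1 \<le> real_of_int \<lfloor>real (Suc n) * x\<rfloor>" by linarith
    then have "(real (Suc n) * x - 1) / real (Suc n) \<le> real_of_int \<lfloor>real (Suc n) * x\<rfloor> / real (Suc n)"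
      by (rule divide_right_mono) auto
    moreover have "(real (Suc n) * x - 1) / real (Suc n) = x - inverse (real (Suc n))"
      by (simp add: field_simps)
    ultimately show "x - inverse (real (Suc n)) \<le> real_of_int \<lfloor>real (Suc n) * x\<rfloor> / real (Suc n)"
      by simp
  qed
  show "\<forall>\<^sub>F n in sequentially. real_of_int \<lfloor>real (Suc n) * x\<rfloor> / real (Suc n) \<le> x"
  proof (intro always_eventually allI)
    fix n
    have "real_of_int \<lfloor>real (Suc n) * x\<rfloor> \<le> real (Suc n) * x" by linarith
    then show "real_of_int \<lfloor>real (Suc n) * x\<rfloor> / real (Suc n) \<le> x"
      by (simp add: field_simps)
  qed
  show "(\<lambda>n. x - inverse (real (Suc n))) \<longlonglongrightarrow> x"
    using tendsto_diff[OF tendsto_const LIMSEQ_inverse_real_of_nat, of x] by simp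
qed simp

lemma quant_lim:
  fixes z :: "'a::euclidean_space"
  shows "(\<lambda>n. \<Sum>b\<in>Basis. (real_of_int \<lfloor>real (Suc n) * (z \<bullet> b)\<rfloor> / real (Suc n)) *\<^sub>R b) \<longlonglongrightarrow> z"
proof -
  have "(\<lambda>n. \<Sum>b\<in>Basis. (real_of_int \<lfloor>real (Suc n) * (z \<bullet> b)\<rfloor> / real (Suc n)) *\<^sub>R b) \<longlonglongrightarrow> (\<Sum>b\<in>Basis. (z \<bullet> b) *\<^sub>R b)"
    by (intro tendsto_sum tendsto_scaleR floor_lim tendsto_const)
  then show ?thesis by (simp add: euclidean_representation)
qed

lemma caratheodory:
  fixes F :: "real \<Rightarrow> 'a::euclidean_space \<Rightarrow> 'b::euclidean_space"
  assumes S: "S \<in> sets lebesgue"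
    and meas: "\<And>z. (\<lambda>t. F t z) \<in> borel_measurable (lebesgue_on S)"
    and cont: "AE t in lebesgue_on S. continuous_on UNIV (F t)"
    and u: "u \<in> borel_measurable (lebesgue_on S)"
  shows "(\<lambda>t. F t (u t)) \<in> borel_measurable (lebesgue_on S)"
proof -
  define Q where "Q n k = (\<Sum>b\<in>Basis. (real_of_int (k b) / real (Suc n)) *\<^sub>R b)" for n and k :: "'a \<Rightarrow> int"
  define K where "K n t = restrict (\<lambda>b. \<lfloor>real (Suc n) * (u t \<bullet> b)\<rfloor>) Basis" for n t
  define I where "I = PiE (Basis::'a set) (\<lambda>_. UNIV::int set)"
  have cI: "countable I" unfolding I_def by (rule countable_PiE) auto
  have m: "(\<lambda>t. F t (Q n (K n t))) \<in> borel_measurable (lebesgue_on S)" for n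
  proof (rule measurable_compose_countable'[where I=I])
    show "(\<lambda>t. F t (Q n k)) \<in> borel_measurable (lebesgue_on S)" for k by (rule meas)
    show "K n \<in> lebesgue_on S \<rightarrow>\<^sub>M count_space I"
    proof (subst measurable_count_space_eq_countable[OF cI], intro conjI ballI)
      show "K n \<in> space (lebesgue_on S) \<rightarrow> I" unfolding K_def I_def by auto
      fix k assume k: "k \<in> I"
      have [measurable]: "(\<lambda>t. real (Suc n) * (u t \<bullet> b)) \<in> borel_measurable (lebesgue_on S)" for b
        using u by (intro borel_measurable_times borel_measurable_inner borel_measurable_const) auto
      have "K n -` {k} \<inter> space (lebesgue_on S) = {t \<in> space (lebesgue_on S). \<forall>b\<in>Basis.
          real_of_int (k b) \<le> real (Suc n) * (u t \<bullet> b) \<and> real (Suc n) * (u t \<bullet> b) < real_of_int (k b) + 1}"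
      proof -
        have l1: "k \<in> PiE B (\<lambda>_. UNIV) \<Longrightarrow> restrict g B = k \<longleftrightarrow> (\<forall>b\<in>B. g b = k b)" for g B
          by (auto simp: PiE_iff extensional_def restrict_def fun_eq_iff)
        have l2: "(\<forall>b\<in>B. \<lfloor>f b::real\<rfloor> = k b) \<longleftrightarrow> (\<forall>b\<in>B. real_of_int (k b) \<le> f b \<and> f b < real_of_int (k b) + 1)" for f B
          by (simp add: floor_eq_iff)
        have "K n t = k \<longleftrightarrow> (\<forall>b\<in>Basis. real_of_int (k b) \<le> real (Suc n) * (u t \<bullet> b) \<and> real (Suc n) * (u t \<bullet> b) < real_of_int (k b) + 1)" for t
          using l1[of "Basis" "\<lambda>b. \<lfloor>real (Suc n) * (u t \<bullet> b)\<rfloor>"] l2[of Basis "\<lambda>b. real (Suc n) * (u t \<bullet> b)"] k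
          unfolding K_def I_def by simp
        then show ?thesis by blast
      qed
      also have "\<dots> \<in> sets (lebesgue_on S)" by measurable
      finally show "K n -` {k} \<inter> space (lebesgue_on S) \<in> sets (lebesgue_on S)" .
    qed
  qed (rule cI)
  have ae: "AE t in lebesgue_on S. (\<lambda>n. F t (Q n (K n t))) \<longlonglongrightarrow> F t (u t)"
    using cont
  proof eventually_elim
    case (elim t)
    have eq: "(\<lambda>n. Q n (K n t)) = (\<lambda>n. \<Sum>b\<in>Basis. (real_of_int \<lfloor>real (Suc n) * (u t \<bullet> b)\<rfloor> / real (Suc n)) *\<^sub>R b)"
      unfolding Q_def K_def by (intro ext sum.cong refl) simp
    have "(\<lambda>n. Q n (K n t)) \<longlonglongrightarrow> u t" unfolding eq by (rule quant_lim)
    moreover have "isCont (F t) (u t)" using elim by (simp add: continuous_on_eq_continuous_at)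
    ultimately show ?case by (rule isCont_tendsto_compose[rotated])
  qed
  show ?thesis by (rule bm_on_AE_lim[OF S m ae])
qed


definition smooth1 :: "(real \<Rightarrow> real) \<Rightarrow> bool" where
  "smooth1 \<phi> \<longleftrightarrow> (\<forall>t. (\<phi> has_real_derivative deriv \<phi> t) (at t)) \<and> continuous_on UNIV (deriv \<phi>)"

definition supp_in :: "(real \<Rightarrow> 'a::zero) \<Rightarrow> real \<Rightarrow> real \<Rightarrow> bool" where
  "supp_in \<phi> c d \<longleftrightarrow> (\<forall>t. t \<notin> {c..d} \<longrightarrow> \<phi> t = 0)"

lemma test_smooth:
  assumes "test_function a b \<phi>"
  shows "smooth1 \<phi>" "\<exists>c d. a < c \<and> c \<le> d \<and> d < b \<and> supp_in \<phi> c d"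
proof -
  have d0: "\<phi> differentiable (at t)" for t
    using assms unfolding test_function_def by (metis funpow_0)
  have d1: "deriv \<phi> differentiable (at t)" for t
  proof -
    have "(deriv ^^ Suc 0) \<phi> differentiable (at t)" using assms unfolding test_function_def by blast
    then show ?thesis by simp
  qed
  have "(\<phi> has_real_derivative deriv \<phi> t) (at t)" for t
    using d0 DERIV_deriv_iff_real_differentiable by blast
  moreover have "continuous_on UNIV (deriv \<phi>)"
    using d1 by (simp add: continuous_at_imp_continuous_on differentiable_imp_continuous_within)
  ultimately show "smooth1 \<phi>" unfolding smooth1_def by blast
  show "\<exists>c d. a < c \<and> c \<le> d \<and> d < b \<and> supp_in \<phi> c d"
    using assms unfolding test_function_def supp_in_def by blast
qed

lemma smooth_cont: "smooth1 \<phi> \<Longrightarrow> continuous_on UNIV \<phi>"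
  unfolding smooth1_def by (meson DERIV_isCont continuous_at_imp_continuous_on)

lemma deriv_out:
  assumes s: "smooth1 \<phi>" and sp: "supp_in \<phi> c d" and t: "t \<notin> {c..d}"
  shows "deriv \<phi> t = 0"
proof -
  have D: "(\<phi> has_real_derivative deriv \<phi> t) (at t)" using s unfolding smooth1_def by blast
  show ?thesis
  proof (cases "t < c")
    case True
    show ?thesis
    proof (rule DERIV_local_const[OF D, of "c - t"])
      show "0 < c - t" using True by simp
      show "\<forall>y. \<bar>t - y\<bar> < c - t \<longrightarrow> \<phi> t = \<phi> y"
      proof (intro allI impI)
        fix y assume "\<bar>t - y\<bar> < c - t"
        then have "y \<notin> {c..d}" "t \<notin> {c..d}" using True by auto
        then show "\<phi> t = \<phi> y" using sp unfolding supp_in_def by simp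
      qed
    qed
  next
    case False
    then have "t > d" using t by auto
    show ?thesis
    proof (rule DERIV_local_const[OF D, of "t - d"])
      show "0 < t - d" using \<open>t > d\<close> by simp
      show "\<forall>y. \<bar>t - y\<bar> < t - d \<longrightarrow> \<phi> t = \<phi> y"
      proof (intro allI impI)
        fix y assume "\<bar>t - y\<bar> < t - d"
        then have "y \<notin> {c..d}" "t \<notin> {c..d}" using \<open>t > d\<close> by auto
        then show "\<phi> t = \<phi> y" using sp unfolding supp_in_def by simp
      qed
    qed
  qed
qed

lemma supp_deriv: "smooth1 \<phi> \<Longrightarrow> supp_in \<phi> c d \<Longrightarrow> supp_in (deriv \<phi>) c d"
  using deriv_out unfolding supp_in_def by blast

lemma supp_bounded:
  fixes f :: "real \<Rightarrow> real"
  assumes "continuous_on UNIV f" "supp_in f c d"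
  shows "\<exists>K\<ge>0. \<forall>t. \<bar>f t\<bar> \<le> K"
proof -
  have "compact (f ` {c..d})"
    using assms(1) by (intro compact_continuous_image) (auto intro: continuous_on_subset)
  then obtain K where K: "\<forall>x\<in>f ` {c..d}. norm x \<le> K"
    using compact_imp_bounded bounded_iff by blast
  have "\<bar>f t\<bar> \<le> max K 0" for t
  proof (cases "t \<in> {c..d}")
    case True
    then have "norm (f t) \<le> K" using K by blast
    then show ?thesis by simp
  next
    case False
    then have "f t = 0" using assms(2) unfolding supp_in_def by blast
    then show ?thesis by simp
  qed
  then show ?thesis by (intro exI[of _ "max K 0"]) auto
qed

lemma L2_on_cong:
  assumes "L2_on S f" "\<And>x. x \<in> S \<Longrightarrow> f x = g x"
  shows "L2_on S g"
proof -
  have sp: "space (lebesgue_on S) = S" by simp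
  have "g \<in> borel_measurable (lebesgue_on S)"
    using assms measurable_cong[of "lebesgue_on S" f g] unfolding L2_on_def sp by blast
  moreover have "integrable (lebesgue_on S) (\<lambda>t. (norm (g t))^2)"
    using assms Bochner_Integration.integrable_cong[of "lebesgue_on S" "lebesgue_on S" "\<lambda>t. (norm (f t))^2" "\<lambda>t. (norm (g t))^2"]
    unfolding L2_on_def sp by simp
  ultimately show ?thesis unfolding L2_on_def by blast
qed

lemma sq_norm_add_le:
  fixes a b :: "'a::real_normed_vector"
  shows "(norm (a + b))^2 \<le> 2 * (norm a)^2 + 2 * (norm b)^2"
proof -
  have "(norm (a + b))^2 \<le> (norm a + norm b)^2"
    by (intro power_mono norm_triangle_ineq) auto
  also have "\<dots> \<le> 2 * (norm a)^2 + 2 * (norm b)^2"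
  proof -
    have "2 * (norm a)^2 + 2 * (norm b)^2 - (norm a + norm b)^2 = (norm a - norm b)^2"
      by (simp add: power2_eq_square algebra_simps)
    moreover have "0 \<le> (norm a - norm b)^2" by simp
    ultimately show ?thesis by linarith
  qed
  finally show ?thesis .
qed

lemma L2_on_add:
  fixes f g :: "real \<Rightarrow> 'a::euclidean_space"
  assumes f: "L2_on S f" and g: "L2_on S g"
  shows "L2_on S (\<lambda>t. f t + g t)"
proof -
  have mf: "f \<in> borel_measurable (lebesgue_on S)" and mg: "g \<in> borel_measurable (lebesgue_on S)"
    using f g unfolding L2_on_def by auto
  have m: "(\<lambda>t. f t + g t) \<in> borel_measurable (lebesgue_on S)"
    using mf mg by (rule borel_measurable_add)
  have i: "integrable (lebesgue_on S) (\<lambda>t. 2 * (norm (f t))^2 + 2 * (norm (g t))^2)"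
    using f g unfolding L2_on_def by (intro Bochner_Integration.integrable_add integrable_mult_right) auto
  have "integrable (lebesgue_on S) (\<lambda>t. (norm (f t + g t))^2)"
  proof (rule Bochner_Integration.integrable_bound[OF i])
    show "(\<lambda>t. (norm (f t + g t))^2) \<in> borel_measurable (lebesgue_on S)"
      using borel_measurable_power[OF measurable_compose[OF m borel_measurable_norm], of 2] by simp
    show "AE x in lebesgue_on S. norm ((norm (f x + g x))^2) \<le> norm (2 * (norm (f x))^2 + 2 * (norm (g x))^2)"
      using sq_norm_add_le by (intro AE_I2) (simp add: abs_of_nonneg)
  qed
  with m show ?thesis unfolding L2_on_def by blast
qed

lemma L2_on_cont:
  fixes f :: "real \<Rightarrow> 'a::euclidean_space"
  assumes "continuous_on {a..b} f"
  shows "L2_on {a..b} f"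
proof -
  have c2: "continuous_on {a..b} (\<lambda>t. (norm (f t))^2)"
    using assms by (intro continuous_intros)
  have "set_integrable lebesgue {a..b} (\<lambda>t. (norm (f t))^2)"
    using absolutely_integrable_continuous_real[OF c2] .
  then have "integrable (lebesgue_on {a..b}) (\<lambda>t. (norm (f t))^2)"
    unfolding set_integrable_def by (subst integrable_restrict_space) auto
  moreover have "f \<in> borel_measurable (lebesgue_on {a..b})"
    using assms by (intro continuous_imp_measurable_on_sets_lebesgue) auto
  ultimately show ?thesis unfolding L2_on_def by blast
qed

lemma supp_set_eq:
  fixes F :: "real \<Rightarrow> 'a::euclidean_space"
  assumes "\<And>x. F x \<noteq> 0 \<Longrightarrow> x \<in> A \<and> x \<in> B"
  shows "set_integrable M A F \<longleftrightarrow> set_integrable M B F" "(LINT x:A|M. F x) = (LINT x:B|M. F x)"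
proof -
  have eq: "(\<lambda>x. indicator A x *\<^sub>R F x) = (\<lambda>x. indicator B x *\<^sub>R F x)"
  proof
    fix x show "indicator A x *\<^sub>R F x = indicator B x *\<^sub>R F x"
      using assms[of x] by (cases "F x = 0") (auto simp: indicator_def)
  qed
  show "set_integrable M A F \<longleftrightarrow> set_integrable M B F"
    unfolding set_integrable_def eq ..
  show "(LINT x:A|M. F x) = (LINT x:B|M. F x)"
    unfolding set_lebesgue_integral_def eq ..
qed

lemma set_int_bounded_mult:
  fixes f :: "real \<Rightarrow> 'a::euclidean_space"
  assumes f: "set_integrable lebesgue A f" and A: "A \<in> sets lebesgue"
    and c: "continuous_on UNIV \<psi>" and K: "\<And>x. \<bar>\<psi> x\<bar> \<le> K"
  shows "set_integrable lebesgue A (\<lambda>x. \<psi> x *\<^sub>R f x)"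
proof -
  have i: "integrable lebesgue (\<lambda>x. indicator A x *\<^sub>R f x)" using f unfolding set_integrable_def .
  have mi: "(\<lambda>x. indicator A x *\<^sub>R f x) \<in> borel_measurable lebesgue" using i by auto
  have "\<psi> \<in> borel_measurable (lebesgue_on UNIV)"
    by (rule continuous_imp_measurable_on_sets_lebesgue[OF c]) simp
  then have mp: "\<psi> \<in> borel_measurable lebesgue" by (simp add: lebesgue_on_UNIV_eq)
  have "integrable lebesgue (\<lambda>x. \<psi> x *\<^sub>R (indicator A x *\<^sub>R f x))"
  proof (rule Bochner_Integration.integrable_bound[OF integrable_scaleR_right[OF i, of K]])
    show "(\<lambda>x. \<psi> x *\<^sub>R (indicator A x *\<^sub>R f x)) \<in> borel_measurable lebesgue"
      using mp mi by (rule borel_measurable_scaleR)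
    show "AE x in lebesgue. norm (\<psi> x *\<^sub>R (indicator A x *\<^sub>R f x)) \<le> norm (K *\<^sub>R (indicator A x *\<^sub>R f x))"
    proof (rule AE_I2)
      fix x
      have "\<bar>\<psi> x\<bar> \<le> \<bar>K\<bar>" using K[of x] by linarith
      then show "norm (\<psi> x *\<^sub>R (indicator A x *\<^sub>R f x)) \<le> norm (K *\<^sub>R (indicator A x *\<^sub>R f x))"
        unfolding norm_scaleR by (rule mult_right_mono) auto
    qed
  qed
  then show ?thesis unfolding set_integrable_def by (simp add: scaleR_left_commute mult.commute)
qed


lemma hwd_cong:
  fixes f g :: "real \<Rightarrow> 'a::euclidean_space"
  assumes h: "has_weak_deriv_on a b f g"
    and ef: "\<And>x. a < x \<Longrightarrow> x < b \<Longrightarrow> f x = f' x"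
    and eg: "\<And>x. a < x \<Longrightarrow> x < b \<Longrightarrow> g x = g' x"
  shows "has_weak_deriv_on a b f' g'"
  unfolding has_weak_deriv_on_def
proof (intro conjI allI impI)
  fix c d assume cd: "a < c \<and> d < b"
  have "set_integrable lebesgue {c..d} f \<and> set_integrable lebesgue {c..d} g"
    using h cd unfolding has_weak_deriv_on_def by blast
  moreover have "set_integrable lebesgue {c..d} f = set_integrable lebesgue {c..d} f'"
    by (rule set_integrable_cong) (use cd ef in auto)
  moreover have "set_integrable lebesgue {c..d} g = set_integrable lebesgue {c..d} g'"
    by (rule set_integrable_cong) (use cd eg in auto)
  ultimately show "set_integrable lebesgue {c..d} f'" "set_integrable lebesgue {c..d} g'" by simp_all
next
  fix \<phi> assume t: "test_function a b \<phi>"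
  have "(LINT t:{a<..<b}|lebesgue. deriv \<phi> t *\<^sub>R f t) = - (LINT t:{a<..<b}|lebesgue. \<phi> t *\<^sub>R g t)"
    using h t unfolding has_weak_deriv_on_def by blast
  moreover have "(LINT t:{a<..<b}|lebesgue. deriv \<phi> t *\<^sub>R f t) = (LINT t:{a<..<b}|lebesgue. deriv \<phi> t *\<^sub>R f' t)"
    by (rule set_lebesgue_integral_cong) (use ef in auto)
  moreover have "(LINT t:{a<..<b}|lebesgue. \<phi> t *\<^sub>R g t) = (LINT t:{a<..<b}|lebesgue. \<phi> t *\<^sub>R g' t)"
    by (rule set_lebesgue_integral_cong) (use eg in auto)
  ultimately show "(LINT t:{a<..<b}|lebesgue. deriv \<phi> t *\<^sub>R f' t) = - (LINT t:{a<..<b}|lebesgue. \<phi> t *\<^sub>R g' t)"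
    by simp
qed

lemma supp_int:
  fixes f :: "real \<Rightarrow> 'a::euclidean_space"
  assumes fi: "set_integrable lebesgue {c..d} f" and sp: "supp_in \<psi> c d"
    and ac: "a < c" and db: "d < b" and cont: "continuous_on UNIV \<psi>"
  shows "set_integrable lebesgue {a<..<b} (\<lambda>x. \<psi> x *\<^sub>R f x)"
proof -
  obtain K where K: "\<And>x. \<bar>\<psi> x\<bar> \<le> K" using supp_bounded[OF cont sp] by blast
  have "set_integrable lebesgue {c..d} (\<lambda>x. \<psi> x *\<^sub>R f x)"
    by (rule set_int_bounded_mult[OF fi _ cont K]) simp
  moreover have "\<psi> x *\<^sub>R f x \<noteq> 0 \<Longrightarrow> x \<in> {c..d} \<and> x \<in> {a<..<b}" for x
    using sp ac db unfolding supp_in_def by (cases "x \<in> {c..d}") auto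
  ultimately show ?thesis using supp_set_eq(1)[of "\<lambda>x. \<psi> x *\<^sub>R f x" "{c..d}" "{a<..<b}"] by blast
qed

lemma hwd_add:
  fixes f g f2 g2 :: "real \<Rightarrow> 'a::euclidean_space"
  assumes h1: "has_weak_deriv_on a b f g" and h2: "has_weak_deriv_on a b f2 g2"
  shows "has_weak_deriv_on a b (\<lambda>x. f x + f2 x) (\<lambda>x. g x + g2 x)"
  unfolding has_weak_deriv_on_def
proof (intro conjI allI impI)
  fix c d assume cd: "a < c \<and> d < b"
  then show "set_integrable lebesgue {c..d} (\<lambda>x. f x + f2 x)" "set_integrable lebesgue {c..d} (\<lambda>x. g x + g2 x)"
    using h1 h2 unfolding has_weak_deriv_on_def by (auto intro!: set_integral_add(1))
next
  fix \<phi> assume t: "test_function a b \<phi>"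
  have sm: "smooth1 \<phi>" using test_smooth(1)[OF t] .
  obtain c d where cd: "a < c" "c \<le> d" "d < b" "supp_in \<phi> c d" using test_smooth(2)[OF t] by blast
  have spd: "supp_in (deriv \<phi>) c d" using supp_deriv[OF sm cd(4)] .
  have cp: "continuous_on UNIV \<phi>" using smooth_cont[OF sm] .
  have cdp: "continuous_on UNIV (deriv \<phi>)" using sm unfolding smooth1_def by blast
  have int1: "set_integrable lebesgue {c..d} F" if "F = f \<or> F = g \<or> F = f2 \<or> F = g2" for F
    using h1 h2 that cd unfolding has_weak_deriv_on_def by blast
  have i1: "set_integrable lebesgue {a<..<b} (\<lambda>x. deriv \<phi> x *\<^sub>R f x)"
    by (rule supp_int[OF int1 spd cd(1) cd(3) cdp]) simp
  have i2: "set_integrable lebesgue {a<..<b} (\<lambda>x. deriv \<phi> x *\<^sub>R f2 x)"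
    by (rule supp_int[OF int1 spd cd(1) cd(3) cdp]) simp
  have i3: "set_integrable lebesgue {a<..<b} (\<lambda>x. \<phi> x *\<^sub>R g x)"
    by (rule supp_int[OF int1 cd(4) cd(1) cd(3) cp]) simp
  have i4: "set_integrable lebesgue {a<..<b} (\<lambda>x. \<phi> x *\<^sub>R g2 x)"
    by (rule supp_int[OF int1 cd(4) cd(1) cd(3) cp]) simp
  have e1: "(LINT t:{a<..<b}|lebesgue. deriv \<phi> t *\<^sub>R f t) = - (LINT t:{a<..<b}|lebesgue. \<phi> t *\<^sub>R g t)"
    using h1 t unfolding has_weak_deriv_on_def by blast
  have e2: "(LINT t:{a<..<b}|lebesgue. deriv \<phi> t *\<^sub>R f2 t) = - (LINT t:{a<..<b}|lebesgue. \<phi> t *\<^sub>R g2 t)"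
    using h2 t unfolding has_weak_deriv_on_def by blast
  have "(LINT t:{a<..<b}|lebesgue. deriv \<phi> t *\<^sub>R (f t + f2 t))
      = (LINT t:{a<..<b}|lebesgue. deriv \<phi> t *\<^sub>R f t + deriv \<phi> t *\<^sub>R f2 t)"
    by (simp add: scaleR_add_right)
  also have "\<dots> = (LINT t:{a<..<b}|lebesgue. deriv \<phi> t *\<^sub>R f t) + (LINT t:{a<..<b}|lebesgue. deriv \<phi> t *\<^sub>R f2 t)"
    using set_integral_add(2)[OF i1 i2] .
  also have "\<dots> = - ((LINT t:{a<..<b}|lebesgue. \<phi> t *\<^sub>R g t) + (LINT t:{a<..<b}|lebesgue. \<phi> t *\<^sub>R g2 t))"
    using e1 e2 by simp
  also have "(LINT t:{a<..<b}|lebesgue. \<phi> t *\<^sub>R g t) + (LINT t:{a<..<b}|lebesgue. \<phi> t *\<^sub>R g2 t)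
      = (LINT t:{a<..<b}|lebesgue. \<phi> t *\<^sub>R g t + \<phi> t *\<^sub>R g2 t)"
    using set_integral_add(2)[OF i3 i4] by simp
  also have "\<dots> = (LINT t:{a<..<b}|lebesgue. \<phi> t *\<^sub>R (g t + g2 t))"
    by (simp add: scaleR_add_right)
  finally show "(LINT t:{a<..<b}|lebesgue. deriv \<phi> t *\<^sub>R (f t + f2 t)) = - (LINT t:{a<..<b}|lebesgue. \<phi> t *\<^sub>R (g t + g2 t))" .
qed

lemma hwd_C1:
  fixes f f' :: "real \<Rightarrow> 'a::euclidean_space"
  assumes fd: "\<And>t. (f has_vector_derivative f' t) (at t)" and cf': "continuous_on UNIV f'"
  shows "has_weak_deriv_on a b f f'"
  unfolding has_weak_deriv_on_def
proof (intro conjI allI impI)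
  have cf: "continuous_on UNIV f"
    using fd by (meson continuous_at_imp_continuous_on has_vector_derivative_continuous)
  fix c d assume cd: "a < c \<and> d < b"
  show "set_integrable lebesgue {c..d} f"
    by (rule absolutely_integrable_continuous_real) (rule continuous_on_subset[OF cf], simp)
  show "set_integrable lebesgue {c..d} f'"
    by (rule absolutely_integrable_continuous_real) (rule continuous_on_subset[OF cf'], simp)
next
  have cf: "continuous_on UNIV f"
    using fd by (meson continuous_at_imp_continuous_on has_vector_derivative_continuous)
  fix \<phi> assume t: "test_function a b \<phi>"
  have sm: "smooth1 \<phi>" using test_smooth(1)[OF t] .
  obtain c d where cd: "a < c" "c \<le> d" "d < b" "supp_in \<phi> c d" using test_smooth(2)[OF t] by blast
  have ab: "a \<le> b" using cd by simp
  have cp: "continuous_on UNIV \<phi>" using smooth_cont[OF sm] .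
  have cdp: "continuous_on UNIV (deriv \<phi>)" using sm unfolding smooth1_def by blast
  have dp: "(\<phi> has_real_derivative deriv \<phi> t) (at t)" for t using sm unfolding smooth1_def by blast
  define F1 where "F1 t = deriv \<phi> t *\<^sub>R f t" for t
  define F2 where "F2 t = \<phi> t *\<^sub>R f' t" for t
  have c1: "continuous_on {a..b} F1" unfolding F1_def
    by (intro continuous_intros continuous_on_subset[OF cdp] continuous_on_subset[OF cf]) auto
  have c2: "continuous_on {a..b} F2" unfolding F2_def
    by (intro continuous_intros continuous_on_subset[OF cp] continuous_on_subset[OF cf']) auto
  have "((\<lambda>t. F2 t + F1 t) has_integral (\<phi> b *\<^sub>R f b - \<phi> a *\<^sub>R f a)) {a..b}"
  proof (rule fundamental_theorem_of_calculus[OF ab])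
    fix x assume "x \<in> {a..b}"
    have "((\<lambda>t. \<phi> t *\<^sub>R f t) has_vector_derivative (\<phi> x *\<^sub>R f' x + deriv \<phi> x *\<^sub>R f x)) (at x)"
      by (rule has_vector_derivative_scaleR[OF dp fd])
    then show "((\<lambda>t. \<phi> t *\<^sub>R f t) has_vector_derivative F2 x + F1 x) (at x within {a..b})"
      unfolding F1_def F2_def by (rule has_vector_derivative_at_within)
  qed
  moreover have "\<phi> a = 0" "\<phi> b = 0" using cd unfolding supp_in_def by auto
  ultimately have hi: "((\<lambda>t. F2 t + F1 t) has_integral 0) {a..b}" by simp
  have i1: "F1 integrable_on {a..b}" using integrable_continuous_interval[OF c1] .
  have i2: "F2 integrable_on {a..b}" using integrable_continuous_interval[OF c2] .
  have "integral {a..b} F2 + integral {a..b} F1 = 0"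
    using hi integral_add[OF i2 i1] integral_unique by metis
  moreover have "(LINT t:{a<..<b}|lebesgue. F1 t) = integral {a..b} F1"
  proof -
    have "set_integrable lebesgue {a<..<b} F1"
      by (rule set_integrable_subset[OF absolutely_integrable_continuous_real[OF c1]]) auto
    then show ?thesis using set_lebesgue_integral_eq_integral(2) integral_open_interval_real by metis
  qed
  moreover have "(LINT t:{a<..<b}|lebesgue. F2 t) = integral {a..b} F2"
  proof -
    have "set_integrable lebesgue {a<..<b} F2"
      by (rule set_integrable_subset[OF absolutely_integrable_continuous_real[OF c2]]) auto
    then show ?thesis using set_lebesgue_integral_eq_integral(2) integral_open_interval_real by metis
  qed
  ultimately show "(LINT t:{a<..<b}|lebesgue. deriv \<phi> t *\<^sub>R f t) = - (LINT t:{a<..<b}|lebesgue. \<phi> t *\<^sub>R f' t)"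
    unfolding F1_def F2_def by (simp add: eq_neg_iff_add_eq_0 add.commute)
qed

lemma H1_on_cong:
  fixes f :: "real \<Rightarrow> 'a::euclidean_space"
  assumes h: "H1_on a b f" and e: "\<And>x. x \<in> {a..b} \<Longrightarrow> f x = f' x"
  shows "H1_on a b f'"
proof -
  obtain g where g: "L2_on {a..b} g" "has_weak_deriv_on a b f g"
    using h unfolding H1_on_def by blast
  have "continuous_on {a..b} f'" using h e continuous_on_cong unfolding H1_on_def by metis
  moreover have "L2_on {a..b} f'" using h e L2_on_cong unfolding H1_on_def by blast
  moreover have "has_weak_deriv_on a b f' g" by (rule hwd_cong[OF g(2)]) (use e in auto)
  ultimately show ?thesis unfolding H1_on_def using g(1) by blast
qed

lemma WD_meas:
  fixes f g :: "real \<Rightarrow> 'a::euclidean_space"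
  assumes h: "has_weak_deriv_on a b f g" and F: "F = f \<or> F = g"
  shows "F \<in> borel_measurable (lebesgue_on {a<..<b})"
proof -
  define \<delta> where "\<delta> n = (b - a) / real (n + 2)" for n :: nat
  have si: "set_integrable lebesgue {a + \<delta> n..b - \<delta> n} F" if "a < b" for n
  proof -
    have "\<delta> n > 0" using that unfolding \<delta>_def by simp
    then show ?thesis using h F unfolding has_weak_deriv_on_def by auto
  qed
  show ?thesis
  proof (cases "a < b")
    case False
    then have "{a<..<b} = {}" by auto
    then show ?thesis by (simp add: borel_measurable_restrict_space_iff)
  next
    case True
    have m: "(\<lambda>x. indicator {a + \<delta> n..b - \<delta> n} x *\<^sub>R F x) \<in> borel_measurable lebesgue" for n
      using si[OF True, of n] unfolding set_integrable_def by auto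
    have "(\<lambda>x. indicator {a<..<b} x *\<^sub>R F x) \<in> borel_measurable lebesgue"
    proof (rule borel_measurable_LIMSEQ_metric[OF m])
      fix x :: real
      show "(\<lambda>n. indicator {a + \<delta> n..b - \<delta> n} x *\<^sub>R F x) \<longlonglongrightarrow> indicator {a<..<b} x *\<^sub>R F x"
      proof (cases "x \<in> {a<..<b}")
        case False
        have "indicator {a + \<delta> n..b - \<delta> n} x = (0::real)" for n
        proof -
          have "\<delta> n > 0" using True unfolding \<delta>_def by simp
          then show ?thesis using False by (auto simp: indicator_def)
        qed
        then show ?thesis using False by simp
      next
        case xin: True
        define m where "m = min (x - a) (b - x)"
        have m0: "m > 0" using xin unfolding m_def by auto
        obtain N :: nat where N: "(b - a) / m < real N" using reals_Archimedean2 by blast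
        have "eventually (\<lambda>n. indicator {a + \<delta> n..b - \<delta> n} x *\<^sub>R F x = indicator {a<..<b} x *\<^sub>R F x) sequentially"
        proof (rule eventually_sequentiallyI[of N])
          fix n assume "N \<le> n"
          then have "(b - a) / m < real (n + 2)" using N by linarith
          then have "(b - a) / real (n + 2) < m" using m0 by (simp add: field_simps)
          then have "\<delta> n < m" unfolding \<delta>_def .
          then have "x \<in> {a + \<delta> n..b - \<delta> n}" unfolding m_def by auto
          then show "indicator {a + \<delta> n..b - \<delta> n} x *\<^sub>R F x = indicator {a<..<b} x *\<^sub>R F x"
            using xin by simp
        qed
        then show ?thesis by (rule tendsto_eventually)
      qed
    qed
    then show ?thesis using bm_on_iff[of "{a<..<b}" F] by simp
  qed
qed


lemma dirderiv:
  fixes F :: "'a::real_normed_vector \<Rightarrow> real"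
  assumes d: "(F has_derivative F') (at z)" and e: "e \<longlonglongrightarrow> 0" and ne: "\<forall>n. e n \<noteq> 0"
  shows "(\<lambda>n. (F (z + e n *\<^sub>R v) - F z) / e n) \<longlonglongrightarrow> F' v"
proof -
  define G where "G s = F (z + s *\<^sub>R v)" for s :: real
  have bl: "bounded_linear F'" using d by (rule has_derivative_bounded_linear)
  have i: "((\<lambda>s. z + s *\<^sub>R v) has_derivative (\<lambda>h. h *\<^sub>R v)) (at 0)"
    by (auto intro!: derivative_eq_intros)
  have d': "(F has_derivative F') (at (z + 0 *\<^sub>R v))" using d by simp
  have "(G has_derivative (\<lambda>h. F' (h *\<^sub>R v))) (at 0)"
    unfolding G_def using has_derivative_compose[OF i d'] by simp
  moreover have "(\<lambda>h. F' (h *\<^sub>R v)) = (*) (F' v)"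
    using linear_scale[OF bounded_linear.linear[OF bl]] by (auto simp: fun_eq_iff)
  ultimately have "DERIV G 0 :> F' v" unfolding has_field_derivative_def by simp
  then have lim: "(\<lambda>h. (G (0 + h) - G 0) / h) \<midarrow>0\<rightarrow> F' v" unfolding DERIV_def .
  have "(\<lambda>n. (G (0 + e n) - G 0) / e n) \<longlonglongrightarrow> F' v"
    using lim LIMSEQ_SEQ_conv[of 0 "\<lambda>h. (G (0 + h) - G 0) / h" "F' v"] e ne by blast
  then show ?thesis unfolding G_def by simp
qed

type_synonym 'n arg4 = "(real^'n) \<times> (real^'n) \<times> (real^'n) \<times> (real^'n)"

locale EL =
  fixes L :: "real \<Rightarrow> real^'n::finite \<Rightarrow> real^'n \<Rightarrow> real^'n \<Rightarrow> real^'n \<Rightarrow> real"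
    and L2 L3 L4 L5 :: "real \<Rightarrow> real^'n \<Rightarrow> real^'n \<Rightarrow> real^'n \<Rightarrow> real^'n \<Rightarrow> real^'n"
    and \<theta>1 \<theta>2 :: "real \<Rightarrow> real^'n" and \<alpha> :: "real^'n"
    and T \<tau>1 \<tau>2 :: real
    and xb xbd :: "real \<Rightarrow> real^'n"
    and \<gamma>1 \<gamma>2 \<gamma>3 \<gamma>4 \<gamma>5 :: "real \<Rightarrow> real"
  assumes tau: "0 < \<tau>2" "\<tau>2 < \<tau>1" "\<tau>1 < T"
    and A1_C1: "AE t in lebesgue_on {0..T}.
        (\<forall>a ab b bb. ((\<lambda>(u,v,w,s). L t u v w s) has_derivative
            (\<lambda>(h1,h2,h3,h4). L2 t a ab b bb \<bullet> h1 + L3 t a ab b bb \<bullet> h2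
                              + L4 t a ab b bb \<bullet> h3 + L5 t a ab b bb \<bullet> h4))
            (at (a,ab,b,bb)))
        \<and> continuous_on UNIV (\<lambda>(a,ab,b,bb). L2 t a ab b bb)
        \<and> continuous_on UNIV (\<lambda>(a,ab,b,bb). L3 t a ab b bb)
        \<and> continuous_on UNIV (\<lambda>(a,ab,b,bb). L4 t a ab b bb)
        \<and> continuous_on UNIV (\<lambda>(a,ab,b,bb). L5 t a ab b bb)"
    and A1_meas: "\<And>a ab b bb. (\<lambda>t. L t a ab b bb) \<in> borel_measurable (lebesgue_on {0..T})"
    and gam: "L2_on {0..T} \<gamma>1" "L2_on {0..T} \<gamma>2" "L2_on {0..T} \<gamma>3" "L2_on {0..T} \<gamma>4" "L2_on {0..T} \<gamma>5"
    and gnn: "\<forall>t\<in>{0..T}. \<gamma>1 t \<ge> 0 \<and> \<gamma>2 t \<ge> 0 \<and> \<gamma>3 t \<ge> 0 \<and> \<gamma>4 t \<ge> 0 \<and> \<gamma>5 t \<ge> 0"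
    and gbd: "AE t in lebesgue_on {0..T}. \<forall>a ab b bb.
              \<bar>L t a ab b bb\<bar> \<le> \<gamma>1 t \<and> norm (L2 t a ab b bb) \<le> \<gamma>2 t
              \<and> norm (L3 t a ab b bb) \<le> \<gamma>3 t \<and> norm (L4 t a ab b bb) \<le> \<gamma>4 t
              \<and> norm (L5 t a ab b bb) \<le> \<gamma>5 t"
    and xb_in: "xb \<in> Dset \<tau>1 \<tau>2 T \<theta>1 \<theta>2 \<alpha>"
    and xbd: "is_xdot \<tau>2 T xb xbd"
    and minimal: "\<And>y yd. y \<in> Dset \<tau>1 \<tau>2 T \<theta>1 \<theta>2 \<alpha> \<Longrightarrow> is_xdot \<tau>2 T y yd \<Longrightarrow>
                    Jfun L \<tau>1 \<tau>2 T xb xbd \<le> Jfun L \<tau>1 \<tau>2 T y yd"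
begin

definition FL :: "real \<Rightarrow> 'n arg4 \<Rightarrow> real" where
  "FL t = (\<lambda>(u,v,w,s). L t u v w s)"

definition DL :: "real \<Rightarrow> 'n arg4 \<Rightarrow> 'n arg4 \<Rightarrow> real" where
  "DL t z = (case z of (a,ab,b,bb) \<Rightarrow> (\<lambda>(h1,h2,h3,h4). L2 t a ab b bb \<bullet> h1 + L3 t a ab b bb \<bullet> h2
                              + L4 t a ab b bb \<bullet> h3 + L5 t a ab b bb \<bullet> h4))"

definition good :: "real \<Rightarrow> bool" where
  "good t \<longleftrightarrow> (\<forall>z. (FL t has_derivative DL t z) (at z)) \<and>
     (\<forall>a ab b bb. \<bar>L t a ab b bb\<bar> \<le> \<gamma>1 t \<and> norm (L2 t a ab b bb) \<le> \<gamma>2 t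
              \<and> norm (L3 t a ab b bb) \<le> \<gamma>3 t \<and> norm (L4 t a ab b bb) \<le> \<gamma>4 t
              \<and> norm (L5 t a ab b bb) \<le> \<gamma>5 t)"

lemma AE_good: "AE t in lebesgue_on {0..T}. good t"
  using A1_C1 gbd
proof eventually_elim
  case (elim t)
  have "(FL t has_derivative DL t z) (at z)" for z
  proof -
    obtain a ab b bb where z: "z = (a,ab,b,bb)" by (cases z) blast
    show ?thesis using elim unfolding z FL_def DL_def by simp
  qed
  then show ?case using elim unfolding good_def by blast
qed

abbreviation args :: "(real \<Rightarrow> real^'n) \<Rightarrow> (real \<Rightarrow> real^'n) \<Rightarrow> real \<Rightarrow> 'n arg4" where
  "args y yd t \<equiv> (y t, y (t - \<tau>1), yd t, yd (t - \<tau>2))"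

lemma MXb: "xb \<in> borel_measurable (lebesgue_on {-\<tau>1..T})"
proof -
  have H: "L2_on {-\<tau>1..-\<tau>2} xb" "H1_on (-\<tau>2) 0 xb" "H1_on 0 T xb"
    using xb_in unfolding Dset_def HH_def by auto
  have m1: "xb \<in> borel_measurable (lebesgue_on {-\<tau>1..-\<tau>2})" using H(1) unfolding L2_on_def by blast
  have m2: "xb \<in> borel_measurable (lebesgue_on {-\<tau>2..0})"
    using H(2) unfolding H1_on_def by (intro continuous_imp_measurable_on_sets_lebesgue) auto
  have m3: "xb \<in> borel_measurable (lebesgue_on {0..T})"
    using H(3) unfolding H1_on_def by (intro continuous_imp_measurable_on_sets_lebesgue) auto
  have m12: "xb \<in> borel_measurable (lebesgue_on ({-\<tau>1..-\<tau>2} \<union> {-\<tau>2..0}))"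
    by (rule bm_on_Un[OF _ _ m1 m2]) auto
  have "xb \<in> borel_measurable (lebesgue_on (({-\<tau>1..-\<tau>2} \<union> {-\<tau>2..0}) \<union> {0..T}))"
    by (rule bm_on_Un[OF _ _ m12 m3]) auto
  moreover have "({-\<tau>1..-\<tau>2} \<union> {-\<tau>2..0}) \<union> {0..T} = {-\<tau>1..T}" using tau by auto
  ultimately show ?thesis by simp
qed

lemma MXd: "xbd \<in> borel_measurable (lebesgue_on {-\<tau>2..T})"
proof -
  have h: "has_weak_deriv_on (-\<tau>2) 0 xb xbd" "has_weak_deriv_on 0 T xb xbd"
    using xbd unfolding is_xdot_def by auto
  have m1: "xbd \<in> borel_measurable (lebesgue_on {-\<tau>2<..<0})" using WD_meas[OF h(1)] by blast
  have m2: "xbd \<in> borel_measurable (lebesgue_on {0<..<T})" using WD_meas[OF h(2)] by blast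
  have "xbd \<in> borel_measurable (lebesgue_on ({-\<tau>2<..<0} \<union> {0<..<T}))"
    by (rule bm_on_Un[OF _ _ m1 m2]) auto
  then have m: "(\<lambda>x. indicator ({-\<tau>2<..<0} \<union> {0<..<T}) x *\<^sub>R xbd x) \<in> borel_measurable lebesgue"
    using bm_on_iff[of "{-\<tau>2<..<0} \<union> {0<..<T}" xbd] by simp
  have "AE x in lebesgue. indicator ({-\<tau>2<..<0} \<union> {0<..<T}) x *\<^sub>R xbd x = indicator {-\<tau>2..T} x *\<^sub>R xbd x"
  proof (rule AE_I')
    show "{-\<tau>2, 0, T} \<in> null_sets lebesgue" by simp
    show "{x \<in> space lebesgue. indicator ({-\<tau>2<..<0} \<union> {0<..<T}) x *\<^sub>R xbd x \<noteq> indicator {-\<tau>2..T} x *\<^sub>R xbd x} \<subseteq> {-\<tau>2, 0, T}"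
      using tau by (auto simp: indicator_def)
  qed
  then have "(\<lambda>x. indicator {-\<tau>2..T} x *\<^sub>R xbd x) \<in> borel_measurable lebesgue"
    by (rule borel_measurable_AE[OF m])
  then show ?thesis using bm_on_iff[of "{-\<tau>2..T}" xbd] by simp
qed

lemma meas_args:
  assumes y: "y \<in> borel_measurable (lebesgue_on {-\<tau>1..T})"
    and yd: "yd \<in> borel_measurable (lebesgue_on {-\<tau>2..T})"
  shows "args y yd \<in> borel_measurable (lebesgue_on {0..T})"
proof -
  have c1: "y \<in> borel_measurable (lebesgue_on {0..T})"
    by (rule bm_on_subset[OF y]) (use tau in auto)
  have "(\<lambda>t. y (t + - \<tau>1)) \<in> borel_measurable (lebesgue_on {0..T+\<tau>1})"
    by (rule bm_on_shift[OF _ _ y]) auto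
  then have "(\<lambda>t. y (t + - \<tau>1)) \<in> borel_measurable (lebesgue_on {0..T})"
    by (rule bm_on_subset) (use tau in auto)
  then have c2: "(\<lambda>t. y (t - \<tau>1)) \<in> borel_measurable (lebesgue_on {0..T})" by simp
  have c3: "yd \<in> borel_measurable (lebesgue_on {0..T})"
    by (rule bm_on_subset[OF yd]) (use tau in auto)
  have "(\<lambda>t. yd (t + - \<tau>2)) \<in> borel_measurable (lebesgue_on {0..T+\<tau>2})"
    by (rule bm_on_shift[OF _ _ yd]) auto
  then have "(\<lambda>t. yd (t + - \<tau>2)) \<in> borel_measurable (lebesgue_on {0..T})"
    by (rule bm_on_subset) (use tau in auto)
  then have c4: "(\<lambda>t. yd (t - \<tau>2)) \<in> borel_measurable (lebesgue_on {0..T})" by simp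
  show ?thesis
    by (intro borel_measurable_Pair c1 c2 c3 c4)
qed

lemma meas_FL:
  assumes u: "u \<in> borel_measurable (lebesgue_on {0..T})"
  shows "(\<lambda>t. FL t (u t)) \<in> borel_measurable (lebesgue_on {0..T})"
proof (rule caratheodory[OF _ _ _ u])
  show "{0..T} \<in> sets lebesgue" by simp
  show "(\<lambda>t. FL t z) \<in> borel_measurable (lebesgue_on {0..T})" for z
  proof -
    obtain a ab b bb where z: "z = (a,ab,b,bb)" by (cases z) blast
    show ?thesis unfolding z FL_def using A1_meas by simp
  qed
  show "AE t in lebesgue_on {0..T}. continuous_on UNIV (FL t)"
    using AE_good
  proof eventually_elim
    case (elim t)
    then have "isCont (FL t) z" for z
      unfolding good_def using has_derivative_continuous by blast
    then show ?case by (simp add: continuous_at_imp_continuous_on)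
  qed
qed

lemma meas_DL:
  assumes u: "u \<in> borel_measurable (lebesgue_on {0..T})"
  shows "(\<lambda>t. DL t (u t) v) \<in> borel_measurable (lebesgue_on {0..T})"
proof (rule bm_on_AE_lim)
  show "{0..T} \<in> sets lebesgue" by simp
  define e where "e n = 1 / real (Suc n)" for n
  show "(\<lambda>t. (FL t (u t + e n *\<^sub>R v) - FL t (u t)) / e n) \<in> borel_measurable (lebesgue_on {0..T})" for n
  proof -
    have "(\<lambda>t. u t + e n *\<^sub>R v) \<in> borel_measurable (lebesgue_on {0..T})"
      using u by (intro borel_measurable_add borel_measurable_const)
    then have "(\<lambda>t. FL t (u t + e n *\<^sub>R v)) \<in> borel_measurable (lebesgue_on {0..T})" by (rule meas_FL)
    then show ?thesis using meas_FL[OF u] by (intro borel_measurable_divide borel_measurable_diff) auto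
  qed
  have e0: "e \<longlonglongrightarrow> 0" unfolding e_def using LIMSEQ_inverse_real_of_nat by (simp add: inverse_eq_divide)
  have ne: "\<forall>n. e n \<noteq> 0" unfolding e_def by simp
  show "AE t in lebesgue_on {0..T}. (\<lambda>n. (FL t (u t + e n *\<^sub>R v) - FL t (u t)) / e n) \<longlonglongrightarrow> DL t (u t) v"
    using AE_good
  proof eventually_elim
    case (elim t)
    then have "(FL t has_derivative DL t (u t)) (at (u t))" unfolding good_def by blast
    then show ?case by (rule dirderiv[OF _ e0 ne])
  qed
qed

end


lemma abs_le_1_sq: "\<bar>x::real\<bar> \<le> 1 + x^2"
proof (cases "\<bar>x\<bar> \<le> 1")
  case True then show ?thesis by (simp add: add_increasing2)
next
  case False
  then have "\<bar>x\<bar> * 1 \<le> \<bar>x\<bar> * \<bar>x\<bar>" by (intro mult_left_mono) auto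
  then show ?thesis by (simp add: power2_eq_square abs_mult_self)
qed

lemma L2_int:
  assumes "L2_on {a..b} (g::real \<Rightarrow> real)"
  shows "integrable (lebesgue_on {a..b}) g"
proof (rule Bochner_Integration.integrable_bound[of _ "\<lambda>t. 1 + (norm (g t))^2"])
  show "integrable (lebesgue_on {a..b}) (\<lambda>t. 1 + (norm (g t))^2)"
    using assms unfolding L2_on_def by (intro Bochner_Integration.integrable_add) auto
  show "g \<in> borel_measurable (lebesgue_on {a..b})" using assms unfolding L2_on_def by blast
  show "AE x in lebesgue_on {a..b}. norm (g x) \<le> norm (1 + (norm (g x))^2)"
    using abs_le_1_sq by (intro AE_I2) auto
qed

context EL begin

abbreviation "LX2 \<equiv> along L2 \<tau>1 \<tau>2 xb xbd"
abbreviation "LX3 \<equiv> along L3 \<tau>1 \<tau>2 xb xbd"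
abbreviation "LX4 \<equiv> along L4 \<tau>1 \<tau>2 xb xbd"
abbreviation "LX5 \<equiv> along L5 \<tau>1 \<tau>2 xb xbd"

lemma gam_int: "integrable (lebesgue_on {0..T}) \<gamma>1" "integrable (lebesgue_on {0..T}) \<gamma>2"
  "integrable (lebesgue_on {0..T}) \<gamma>3" "integrable (lebesgue_on {0..T}) \<gamma>4" "integrable (lebesgue_on {0..T}) \<gamma>5"
  using gam by (auto intro: L2_int)

lemma meas_Lk:
  assumes y: "y \<in> borel_measurable (lebesgue_on {-\<tau>1..T})"
    and yd: "yd \<in> borel_measurable (lebesgue_on {-\<tau>2..T})"
  shows "(\<lambda>t. L2 t (y t) (y (t - \<tau>1)) (yd t) (yd (t - \<tau>2))) \<in> borel_measurable (lebesgue_on {0..T})"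
    "(\<lambda>t. L3 t (y t) (y (t - \<tau>1)) (yd t) (yd (t - \<tau>2))) \<in> borel_measurable (lebesgue_on {0..T})"
    "(\<lambda>t. L4 t (y t) (y (t - \<tau>1)) (yd t) (yd (t - \<tau>2))) \<in> borel_measurable (lebesgue_on {0..T})"
    "(\<lambda>t. L5 t (y t) (y (t - \<tau>1)) (yd t) (yd (t - \<tau>2))) \<in> borel_measurable (lebesgue_on {0..T})"
proof -
  have u: "args y yd \<in> borel_measurable (lebesgue_on {0..T})" by (rule meas_args[OF y yd])
  have D: "(\<lambda>t. DL t (args y yd t) v) \<in> borel_measurable (lebesgue_on {0..T})" for v
    by (rule meas_DL[OF u])
  show "(\<lambda>t. L2 t (y t) (y (t - \<tau>1)) (yd t) (yd (t - \<tau>2))) \<in> borel_measurable (lebesgue_on {0..T})"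
    unfolding borel_measurable_euclidean_space[where f="\<lambda>t. L2 t (y t) (y (t - \<tau>1)) (yd t) (yd (t - \<tau>2))"]
  proof
    fix i :: "real^'n" assume "i \<in> Basis"
    show "(\<lambda>t. L2 t (y t) (y (t - \<tau>1)) (yd t) (yd (t - \<tau>2)) \<bullet> i) \<in> borel_measurable (lebesgue_on {0..T})"
      using D[of "(i,0,0,0)"] unfolding DL_def by simp
  qed
  show "(\<lambda>t. L3 t (y t) (y (t - \<tau>1)) (yd t) (yd (t - \<tau>2))) \<in> borel_measurable (lebesgue_on {0..T})"
    unfolding borel_measurable_euclidean_space[where f="\<lambda>t. L3 t (y t) (y (t - \<tau>1)) (yd t) (yd (t - \<tau>2))"]
  proof
    fix i :: "real^'n" assume "i \<in> Basis"
    show "(\<lambda>t. L3 t (y t) (y (t - \<tau>1)) (yd t) (yd (t - \<tau>2)) \<bullet> i) \<in> borel_measurable (lebesgue_on {0..T})"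
      using D[of "(0,i,0,0)"] unfolding DL_def by simp
  qed
  show "(\<lambda>t. L4 t (y t) (y (t - \<tau>1)) (yd t) (yd (t - \<tau>2))) \<in> borel_measurable (lebesgue_on {0..T})"
    unfolding borel_measurable_euclidean_space[where f="\<lambda>t. L4 t (y t) (y (t - \<tau>1)) (yd t) (yd (t - \<tau>2))"]
  proof
    fix i :: "real^'n" assume "i \<in> Basis"
    show "(\<lambda>t. L4 t (y t) (y (t - \<tau>1)) (yd t) (yd (t - \<tau>2)) \<bullet> i) \<in> borel_measurable (lebesgue_on {0..T})"
      using D[of "(0,0,i,0)"] unfolding DL_def by simp
  qed
  show "(\<lambda>t. L5 t (y t) (y (t - \<tau>1)) (yd t) (yd (t - \<tau>2))) \<in> borel_measurable (lebesgue_on {0..T})"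
    unfolding borel_measurable_euclidean_space[where f="\<lambda>t. L5 t (y t) (y (t - \<tau>1)) (yd t) (yd (t - \<tau>2))"]
  proof
    fix i :: "real^'n" assume "i \<in> Basis"
    show "(\<lambda>t. L5 t (y t) (y (t - \<tau>1)) (yd t) (yd (t - \<tau>2)) \<bullet> i) \<in> borel_measurable (lebesgue_on {0..T})"
      using D[of "(0,0,0,i)"] unfolding DL_def by simp
  qed
qed

lemma meas_LX: "LX2 \<in> borel_measurable (lebesgue_on {0..T})" "LX3 \<in> borel_measurable (lebesgue_on {0..T})"
  "LX4 \<in> borel_measurable (lebesgue_on {0..T})" "LX5 \<in> borel_measurable (lebesgue_on {0..T})"
  using meas_Lk[OF MXb MXd] unfolding along_def by auto

lemma good_bnd:
  assumes "good t"
  shows "\<bar>L t a ab b bb\<bar> \<le> \<bar>\<gamma>1 t\<bar>" "norm (L2 t a ab b bb) \<le> \<bar>\<gamma>2 t\<bar>"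
    "norm (L3 t a ab b bb) \<le> \<bar>\<gamma>3 t\<bar>" "norm (L4 t a ab b bb) \<le> \<bar>\<gamma>4 t\<bar>"
    "norm (L5 t a ab b bb) \<le> \<bar>\<gamma>5 t\<bar>"
  using assms unfolding good_def by (meson abs_ge_self order_trans)+

lemma int_LX: "integrable (lebesgue_on {0..T}) LX2" "integrable (lebesgue_on {0..T}) LX3"
  "integrable (lebesgue_on {0..T}) LX4" "integrable (lebesgue_on {0..T}) LX5"
proof -
  have g: "AE t in lebesgue_on {0..T}. good t" by (rule AE_good)
  show "integrable (lebesgue_on {0..T}) LX2"
    by (rule Bochner_Integration.integrable_bound[OF gam_int(2) meas_LX(1)])
      (use g in \<open>eventually_elim, auto simp: along_def good_bnd\<close>)
  show "integrable (lebesgue_on {0..T}) LX3"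
    by (rule Bochner_Integration.integrable_bound[OF gam_int(3) meas_LX(2)])
      (use g in \<open>eventually_elim, auto simp: along_def good_bnd\<close>)
  show "integrable (lebesgue_on {0..T}) LX4"
    by (rule Bochner_Integration.integrable_bound[OF gam_int(4) meas_LX(3)])
      (use g in \<open>eventually_elim, auto simp: along_def good_bnd\<close>)
  show "integrable (lebesgue_on {0..T}) LX5"
    by (rule Bochner_Integration.integrable_bound[OF gam_int(5) meas_LX(4)])
      (use g in \<open>eventually_elim, auto simp: along_def good_bnd\<close>)
qed

lemma Jfun_eq: "Jfun L \<tau>1 \<tau>2 T y yd = integral\<^sup>L (lebesgue_on {0..T}) (\<lambda>t. FL t (args y yd t))"
  unfolding Jfun_def set_lebesgue_integral_def FL_def
  by (subst integral_restrict_space) auto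

lemma int_FL:
  assumes "args y yd \<in> borel_measurable (lebesgue_on {0..T})"
  shows "integrable (lebesgue_on {0..T}) (\<lambda>t. FL t (args y yd t))"
proof (rule Bochner_Integration.integrable_bound[OF gam_int(1)])
  show "(\<lambda>t. FL t (args y yd t)) \<in> borel_measurable (lebesgue_on {0..T})" by (rule meas_FL[OF assms])
  show "AE t in lebesgue_on {0..T}. norm (FL t (args y yd t)) \<le> norm (\<gamma>1 t)"
    using AE_good by eventually_elim (auto simp: FL_def good_bnd)
qed

lemma var_mem:
  fixes e :: "real^'n"
  assumes sm: "smooth1 \<phi>" and sp: "supp_in \<phi> c d" and c0: "0 < c" and dT: "d < T"
  defines "y \<equiv> \<lambda>t. xb t + \<phi> t *\<^sub>R e" and "yd \<equiv> \<lambda>t. xbd t + deriv \<phi> t *\<^sub>R e"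
  shows "y \<in> Dset \<tau>1 \<tau>2 T \<theta>1 \<theta>2 \<alpha>" "is_xdot \<tau>2 T y yd"
proof -
  have z: "\<phi> t = 0" if "t \<le> 0 \<or> t \<ge> T" for t
    using sp that c0 dT unfolding supp_in_def by auto
  have zd: "deriv \<phi> t = 0" if "t \<le> 0 \<or> t \<ge> T" for t
    using supp_deriv[OF sm sp] that c0 dT unfolding supp_in_def by auto
  have cp: "continuous_on UNIV \<phi>" by (rule smooth_cont[OF sm])
  have cdp: "continuous_on UNIV (deriv \<phi>)" using sm unfolding smooth1_def by blast
  have dp: "(\<phi> has_real_derivative deriv \<phi> t) (at t)" for t using sm unfolding smooth1_def by blast
  have hd: "((\<lambda>t. \<phi> t *\<^sub>R e) has_vector_derivative deriv \<phi> t *\<^sub>R e) (at t)" for t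
    using has_vector_derivative_scaleR[OF dp has_vector_derivative_const[of e]] by simp
  have ch: "continuous_on UNIV (\<lambda>t. \<phi> t *\<^sub>R e)" using cp by (intro continuous_intros)
  have chd: "continuous_on UNIV (\<lambda>t. deriv \<phi> t *\<^sub>R e)" using cdp by (intro continuous_intros)
  have hwdh: "has_weak_deriv_on a b (\<lambda>t. \<phi> t *\<^sub>R e) (\<lambda>t. deriv \<phi> t *\<^sub>R e)" for a b
    by (rule hwd_C1[OF hd chd])
  have XD: "xb \<in> Dset \<tau>1 \<tau>2 T \<theta>1 \<theta>2 \<alpha>" by (rule xb_in)
  then have H: "L2_on {-\<tau>1..-\<tau>2} xb" "H1_on (-\<tau>2) 0 xb" "H1_on 0 T xb"
    and th: "\<forall>t\<in>{-\<tau>1..<-\<tau>2}. xb t = \<theta>1 t" "\<forall>t\<in>{-\<tau>2..0}. xb t = \<theta>2 t" "xb T = \<alpha>"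
    unfolding Dset_def HH_def by auto
  have yx: "y t = xb t" if "t \<le> 0" for t using z[of t] that unfolding y_def by simp
  have ydx: "yd t = xbd t" if "t \<le> 0" for t using zd[of t] that unfolding yd_def by simp
  have "L2_on {-\<tau>1..-\<tau>2} y" by (rule L2_on_cong[OF H(1)]) (use yx tau in auto)
  moreover have "H1_on (-\<tau>2) 0 y" by (rule H1_on_cong[OF H(2)]) (use yx in auto)
  moreover have "H1_on 0 T y"
  proof -
    obtain g0 where g0: "L2_on {0..T} g0" "has_weak_deriv_on 0 T xb g0"
      using H(3) unfolding H1_on_def by blast
    have "continuous_on {0..T} y"
      using H(3) unfolding H1_on_def y_def by (intro continuous_on_add continuous_on_subset[OF ch]) auto
    moreover have "L2_on {0..T} y"
      unfolding y_def using H(3) L2_on_cont[OF continuous_on_subset[OF ch]] unfolding H1_on_def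
      by (intro L2_on_add) auto
    moreover have "L2_on {0..T} (\<lambda>t. g0 t + deriv \<phi> t *\<^sub>R e)"
      using g0(1) L2_on_cont[OF continuous_on_subset[OF chd]] by (intro L2_on_add) auto
    moreover have "has_weak_deriv_on 0 T y (\<lambda>t. g0 t + deriv \<phi> t *\<^sub>R e)"
      unfolding y_def by (rule hwd_add[OF g0(2) hwdh])
    ultimately show ?thesis unfolding H1_on_def by blast
  qed
  moreover have "\<forall>t\<in>{-\<tau>1..<-\<tau>2}. y t = \<theta>1 t" using th(1) yx tau by auto
  moreover have "\<forall>t\<in>{-\<tau>2..0}. y t = \<theta>2 t" using th(2) yx by auto
  moreover have "y T = \<alpha>" using th(3) z[of T] unfolding y_def by simp
  ultimately show "y \<in> Dset \<tau>1 \<tau>2 T \<theta>1 \<theta>2 \<alpha>" unfolding Dset_def HH_def by blast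
  have X: "has_weak_deriv_on (-\<tau>2) 0 xb xbd" "has_weak_deriv_on 0 T xb xbd"
    using xbd unfolding is_xdot_def by auto
  have "has_weak_deriv_on (-\<tau>2) 0 y yd" by (rule hwd_cong[OF X(1)]) (use yx ydx in auto)
  moreover have "has_weak_deriv_on 0 T y yd"
    unfolding y_def yd_def by (rule hwd_add[OF X(2) hwdh])
  ultimately show "is_xdot \<tau>2 T y yd" unfolding is_xdot_def by blast
qed

end


lemma line_deriv:
  fixes F :: "'a::real_normed_vector \<Rightarrow> real"
  assumes d: "(F has_derivative F') (at (z + s *\<^sub>R v))"
  shows "((\<lambda>s. F (z + s *\<^sub>R v)) has_real_derivative F' v) (at s)"
proof -
  have bl: "bounded_linear F'" using d by (rule has_derivative_bounded_linear)
  have i: "((\<lambda>s. z + s *\<^sub>R v) has_derivative (\<lambda>h. h *\<^sub>R v)) (at s)"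
    by (auto intro!: derivative_eq_intros)
  have "((\<lambda>s. F (z + s *\<^sub>R v)) has_derivative (\<lambda>h. F' (h *\<^sub>R v))) (at s)"
    using has_derivative_compose[OF i d] by simp
  moreover have "(\<lambda>h. F' (h *\<^sub>R v)) = (*) (F' v)"
    using linear_scale[OF bounded_linear.linear[OF bl]] by (auto simp: fun_eq_iff)
  ultimately show ?thesis unfolding has_field_derivative_def by simp
qed

lemma mvt_bound:
  fixes G :: "real \<Rightarrow> real"
  assumes d: "\<And>s. (G has_real_derivative G' s) (at s)" and B: "\<And>s. \<bar>G' s\<bar> \<le> B"
  shows "\<bar>G x - G y\<bar> \<le> B * \<bar>x - y\<bar>"
proof -
  have *: "\<bar>G b - G a\<bar> \<le> B * \<bar>b - a\<bar>" if ab: "a < b" for a b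
  proof -
    obtain z where "G b - G a = (b - a) * G' z" using MVT2[OF ab d] by blast
    then have "\<bar>G b - G a\<bar> = \<bar>b - a\<bar> * \<bar>G' z\<bar>" by (simp add: abs_mult)
    also have "\<dots> \<le> \<bar>b - a\<bar> * B" by (intro mult_left_mono B) auto
    finally show ?thesis by (simp add: mult.commute)
  qed
  show ?thesis
  proof (cases x y rule: linorder_cases)
    case less then show ?thesis using *[OF less] by (simp add: abs_minus_commute)
  next
    case equal then show ?thesis by simp
  next
    case greater then show ?thesis using *[OF greater] by simp
  qed
qed

lemma int_scal:
  fixes f :: "'a \<Rightarrow> 'b::euclidean_space"
  assumes f: "integrable M f" and s: "s \<in> borel_measurable M" and K: "\<And>t. \<bar>s t\<bar> \<le> K"
  shows "integrable M (\<lambda>t. s t *\<^sub>R f t)"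
proof (rule Bochner_Integration.integrable_bound[OF integrable_scaleR_right[OF f, of K]])
  show "(\<lambda>t. s t *\<^sub>R f t) \<in> borel_measurable M" using s f by (intro borel_measurable_scaleR) auto
  show "AE x in M. norm (s x *\<^sub>R f x) \<le> norm (K *\<^sub>R f x)"
  proof (rule AE_I2)
    fix x
    have "\<bar>s x\<bar> \<le> \<bar>K\<bar>" using K[of x] by linarith
    then show "norm (s x *\<^sub>R f x) \<le> norm (K *\<^sub>R f x)" unfolding norm_scaleR by (rule mult_right_mono) auto
  qed
qed

context EL begin

definition Wf :: "(real \<Rightarrow> real) \<Rightarrow> real \<Rightarrow> real^'n" where
  "Wf \<phi> t = \<phi> t *\<^sub>R LX2 t + \<phi> (t - \<tau>1) *\<^sub>R LX3 t + deriv \<phi> t *\<^sub>R LX4 t + deriv \<phi> (t - \<tau>2) *\<^sub>R LX5 t"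

lemma cont_meas: "continuous_on UNIV f \<Longrightarrow> (f::real \<Rightarrow> real) \<in> borel_measurable (lebesgue_on {0..T})"
  by (rule continuous_imp_measurable_on_sets_lebesgue) (auto intro: continuous_on_subset)

lemma smooth_K:
  assumes sm: "smooth1 \<phi>" and sp: "supp_in \<phi> c d"
  shows "\<exists>K\<ge>0. \<forall>t. \<bar>\<phi> t\<bar> \<le> K \<and> \<bar>deriv \<phi> t\<bar> \<le> K"
proof -
  obtain K1 where K1: "K1 \<ge> 0" "\<forall>t. \<bar>\<phi> t\<bar> \<le> K1" using supp_bounded[OF smooth_cont[OF sm] sp] by blast
  have cdp: "continuous_on UNIV (deriv \<phi>)" using sm unfolding smooth1_def by blast
  obtain K2 where K2: "K2 \<ge> 0" "\<forall>t. \<bar>deriv \<phi> t\<bar> \<le> K2" using supp_bounded[OF cdp supp_deriv[OF sm sp]] by blast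
  show ?thesis by (rule exI[of _ "max K1 K2"]) (use K1 K2 in \<open>auto simp: le_max_iff_disj\<close>)
qed

lemma Wf_int:
  assumes sm: "smooth1 \<phi>" and sp: "supp_in \<phi> c d"
  shows "integrable (lebesgue_on {0..T}) (\<lambda>t. \<phi> t *\<^sub>R LX2 t)"
    "integrable (lebesgue_on {0..T}) (\<lambda>t. \<phi> (t - \<tau>1) *\<^sub>R LX3 t)"
    "integrable (lebesgue_on {0..T}) (\<lambda>t. deriv \<phi> t *\<^sub>R LX4 t)"
    "integrable (lebesgue_on {0..T}) (\<lambda>t. deriv \<phi> (t - \<tau>2) *\<^sub>R LX5 t)"
    "integrable (lebesgue_on {0..T}) (Wf \<phi>)"
proof -
  obtain K where K: "\<And>t. \<bar>\<phi> t\<bar> \<le> K" "\<And>t. \<bar>deriv \<phi> t\<bar> \<le> K" using smooth_K[OF sm sp] by blast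
  have cp: "continuous_on UNIV \<phi>" by (rule smooth_cont[OF sm])
  have cdp: "continuous_on UNIV (deriv \<phi>)" using sm unfolding smooth1_def by blast
  have m1: "\<phi> \<in> borel_measurable (lebesgue_on {0..T})" by (rule cont_meas[OF cp])
  have m2: "(\<lambda>t. \<phi> (t - \<tau>1)) \<in> borel_measurable (lebesgue_on {0..T})"
    by (rule cont_meas) (intro continuous_on_compose2[OF cp] continuous_intros, auto)
  have m3: "deriv \<phi> \<in> borel_measurable (lebesgue_on {0..T})" by (rule cont_meas[OF cdp])
  have m4: "(\<lambda>t. deriv \<phi> (t - \<tau>2)) \<in> borel_measurable (lebesgue_on {0..T})"
    by (rule cont_meas) (intro continuous_on_compose2[OF cdp] continuous_intros, auto)
  show i1: "integrable (lebesgue_on {0..T}) (\<lambda>t. \<phi> t *\<^sub>R LX2 t)"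
    by (rule int_scal[OF int_LX(1) m1 K(1)])
  show i2: "integrable (lebesgue_on {0..T}) (\<lambda>t. \<phi> (t - \<tau>1) *\<^sub>R LX3 t)"
    by (rule int_scal[OF int_LX(2) m2 K(1)])
  show i3: "integrable (lebesgue_on {0..T}) (\<lambda>t. deriv \<phi> t *\<^sub>R LX4 t)"
    by (rule int_scal[OF int_LX(3) m3 K(2)])
  show i4: "integrable (lebesgue_on {0..T}) (\<lambda>t. deriv \<phi> (t - \<tau>2) *\<^sub>R LX5 t)"
    by (rule int_scal[OF int_LX(4) m4 K(2)])
  show "integrable (lebesgue_on {0..T}) (Wf \<phi>)"
    unfolding Wf_def by (intro Bochner_Integration.integrable_add i1 i2 i3 i4)
qed

lemma DL_bound:
  assumes g: "good t" and v: "norm v1 \<le> R" "norm v2 \<le> R" "norm v3 \<le> R" "norm v4 \<le> R"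
  shows "\<bar>DL t w (v1,v2,v3,v4)\<bar> \<le> R * (\<bar>\<gamma>2 t\<bar> + \<bar>\<gamma>3 t\<bar> + \<bar>\<gamma>4 t\<bar> + \<bar>\<gamma>5 t\<bar>)"
proof -
  obtain a ab b bb where w: "w = (a,ab,b,bb)" by (cases w) blast
  have R: "R \<ge> 0" using v(1) norm_ge_zero order_trans by blast
  have t: "\<bar>x \<bullet> v\<bar> \<le> \<bar>\<gamma>\<bar> * R" if "norm x \<le> \<bar>\<gamma>\<bar>" "norm v \<le> R" for x v :: "real^'n" and \<gamma>
  proof -
    have "\<bar>x \<bullet> v\<bar> \<le> norm x * norm v" by (rule Cauchy_Schwarz_ineq2)
    also have "\<dots> \<le> \<bar>\<gamma>\<bar> * R" using that by (intro mult_mono) auto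
    finally show ?thesis .
  qed
  have "\<bar>DL t w (v1,v2,v3,v4)\<bar> \<le> \<bar>L2 t a ab b bb \<bullet> v1\<bar> + \<bar>L3 t a ab b bb \<bullet> v2\<bar> + \<bar>L4 t a ab b bb \<bullet> v3\<bar> + \<bar>L5 t a ab b bb \<bullet> v4\<bar>"
    unfolding w DL_def by simp
  also have "\<dots> \<le> \<bar>\<gamma>2 t\<bar> * R + \<bar>\<gamma>3 t\<bar> * R + \<bar>\<gamma>4 t\<bar> * R + \<bar>\<gamma>5 t\<bar> * R"
    using t[OF good_bnd(2)[OF g, of a ab b bb] v(1)] t[OF good_bnd(3)[OF g, of a ab b bb] v(2)] t[OF good_bnd(4)[OF g, of a ab b bb] v(3)] t[OF good_bnd(5)[OF g, of a ab b bb] v(4)]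
    by linarith
  finally show ?thesis by (simp add: algebra_simps)
qed

end


context EL begin

lemma FL_bnd: "good t \<Longrightarrow> \<bar>FL t w\<bar> \<le> \<bar>\<gamma>1 t\<bar>"
  by (cases w) (auto simp: FL_def good_bnd)

lemma EL_var:
  assumes sm: "smooth1 \<phi>" and sp: "supp_in \<phi> c d" and c0: "0 < c" and dT: "d < T"
  shows "integral\<^sup>L (lebesgue_on {0..T}) (Wf \<phi>) = 0"
proof -
  obtain K where K0: "K \<ge> 0" and K: "\<And>t. \<bar>\<phi> t\<bar> \<le> K" "\<And>t. \<bar>deriv \<phi> t\<bar> \<le> K"
    using smooth_K[OF sm sp] by blast
  have cp: "continuous_on UNIV \<phi>" by (rule smooth_cont[OF sm])
  have cdp: "continuous_on UNIV (deriv \<phi>)" using sm unfolding smooth1_def by blast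
  have m1: "\<phi> \<in> borel_measurable (lebesgue_on {0..T})" by (rule cont_meas[OF cp])
  have m2: "(\<lambda>t. \<phi> (t - \<tau>1)) \<in> borel_measurable (lebesgue_on {0..T})"
    by (rule cont_meas) (intro continuous_on_compose2[OF cp] continuous_intros, auto)
  have m3: "deriv \<phi> \<in> borel_measurable (lebesgue_on {0..T})" by (rule cont_meas[OF cdp])
  have m4: "(\<lambda>t. deriv \<phi> (t - \<tau>2)) \<in> borel_measurable (lebesgue_on {0..T})"
    by (rule cont_meas) (intro continuous_on_compose2[OF cdp] continuous_intros, auto)
  define z where "z = args xb xbd"
  have mz: "z \<in> borel_measurable (lebesgue_on {0..T})" unfolding z_def by (rule meas_args[OF MXb MXd])
  have Wi: "integrable (lebesgue_on {0..T}) (Wf \<phi>)" by (rule Wf_int(5)[OF sm sp])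
  have key: "integral\<^sup>L (lebesgue_on {0..T}) (Wf \<phi>) \<bullet> e = 0" for e
  proof -
    define V where "V t = (\<phi> t *\<^sub>R e, \<phi> (t - \<tau>1) *\<^sub>R e, deriv \<phi> t *\<^sub>R e, deriv \<phi> (t - \<tau>2) *\<^sub>R e)" for t
    have mV: "V \<in> borel_measurable (lebesgue_on {0..T})"
      unfolding V_def
      by (intro borel_measurable_Pair borel_measurable_scaleR m1 m2 m3 m4 borel_measurable_const)
    define R where "R = K * norm e"
    have VR: "norm (\<phi> t *\<^sub>R e) \<le> R" "norm (\<phi> (t - \<tau>1) *\<^sub>R e) \<le> R"
      "norm (deriv \<phi> t *\<^sub>R e) \<le> R" "norm (deriv \<phi> (t - \<tau>2) *\<^sub>R e) \<le> R" for t
      unfolding R_def norm_scaleR using K by (auto intro: mult_right_mono)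
    have DLW: "DL t (z t) (V t) = Wf \<phi> t \<bullet> e" for t
      unfolding DL_def z_def V_def Wf_def along_def by (simp add: inner_add_left)
    have mFLs: "(\<lambda>t. FL t (z t + s *\<^sub>R V t)) \<in> borel_measurable (lebesgue_on {0..T})" for s
      using mz mV by (intro meas_FL borel_measurable_add borel_measurable_scaleR borel_measurable_const)
    have mFL0: "(\<lambda>t. FL t (z t)) \<in> borel_measurable (lebesgue_on {0..T})" by (rule meas_FL[OF mz])
    have intF: "integrable (lebesgue_on {0..T}) (\<lambda>t. FL t (z t + s *\<^sub>R V t))" for s
    proof (rule Bochner_Integration.integrable_bound[OF gam_int(1) mFLs])
      show "AE t in lebesgue_on {0..T}. norm (FL t (z t + s *\<^sub>R V t)) \<le> norm (\<gamma>1 t)"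
        using AE_good by eventually_elim (simp add: FL_bnd)
    qed
    have intF0: "integrable (lebesgue_on {0..T}) (\<lambda>t. FL t (z t))"
      using intF[of 0] by simp
    have Jle: "integral\<^sup>L (lebesgue_on {0..T}) (\<lambda>t. FL t (z t)) \<le> integral\<^sup>L (lebesgue_on {0..T}) (\<lambda>t. FL t (z t + s *\<^sub>R V t))" for s
    proof -
      define y where "y = (\<lambda>t. xb t + \<phi> t *\<^sub>R (s *\<^sub>R e))"
      define yd where "yd = (\<lambda>t. xbd t + deriv \<phi> t *\<^sub>R (s *\<^sub>R e))"
      have "y \<in> Dset \<tau>1 \<tau>2 T \<theta>1 \<theta>2 \<alpha>" "is_xdot \<tau>2 T y yd"
        unfolding y_def yd_def by (rule var_mem[OF sm sp c0 dT])+
      then have "Jfun L \<tau>1 \<tau>2 T xb xbd \<le> Jfun L \<tau>1 \<tau>2 T y yd" by (rule minimal)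
      moreover have "args y yd t = z t + s *\<^sub>R V t" for t
        unfolding y_def yd_def z_def V_def by (simp add: prod_eq_iff mult.commute)
      ultimately show ?thesis unfolding Jfun_eq z_def by simp
    qed
    define w where "w t = R * (\<bar>\<gamma>2 t\<bar> + \<bar>\<gamma>3 t\<bar> + \<bar>\<gamma>4 t\<bar> + \<bar>\<gamma>5 t\<bar>)" for t
    have wi: "integrable (lebesgue_on {0..T}) w"
      unfolding w_def using gam_int
      by (intro integrable_mult_right Bochner_Integration.integrable_add integrable_abs) auto
    have conv: "(\<lambda>n. integral\<^sup>L (lebesgue_on {0..T}) (\<lambda>t. (FL t (z t + en n *\<^sub>R V t) - FL t (z t)) / en n))
        \<longlonglongrightarrow> integral\<^sup>L (lebesgue_on {0..T}) (\<lambda>t. Wf \<phi> t \<bullet> e)"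
      if en0: "en \<longlonglongrightarrow> 0" and enz: "\<forall>n. en n \<noteq> 0" for en
    proof (rule integral_dominated_convergence[OF _ _ wi])
      show "(\<lambda>t. Wf \<phi> t \<bullet> e) \<in> borel_measurable (lebesgue_on {0..T})"
        using Wi by (intro borel_measurable_inner borel_measurable_const) auto
      show "(\<lambda>t. (FL t (z t + en i *\<^sub>R V t) - FL t (z t)) / en i) \<in> borel_measurable (lebesgue_on {0..T})" for i
        using mFLs mFL0 by (intro borel_measurable_divide borel_measurable_diff borel_measurable_const) auto
      show "AE t in lebesgue_on {0..T}. (\<lambda>i. (FL t (z t + en i *\<^sub>R V t) - FL t (z t)) / en i) \<longlonglongrightarrow> Wf \<phi> t \<bullet> e"
        using AE_good
      proof eventually_elim
        case (elim t)
        then have "(FL t has_derivative DL t (z t)) (at (z t))" unfolding good_def by blast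
        from dirderiv[OF this en0 enz, of "V t"] show ?case by (simp add: DLW)
      qed
      show "AE t in lebesgue_on {0..T}. norm ((FL t (z t + en i *\<^sub>R V t) - FL t (z t)) / en i) \<le> w t" for i
        using AE_good
      proof eventually_elim
        case (elim t)
        define G where "G s = FL t (z t + s *\<^sub>R V t)" for s
        have dG: "(G has_real_derivative DL t (z t + s *\<^sub>R V t) (V t)) (at s)" for s
          unfolding G_def by (rule line_deriv[where F'="DL t (z t + s *\<^sub>R V t)"]) (use elim in \<open>unfold good_def, blast\<close>)
        have bG: "\<bar>DL t (z t + s *\<^sub>R V t) (V t)\<bar> \<le> w t" for s
          unfolding V_def w_def by (rule DL_bound[OF elim VR])
        have "\<bar>G (en i) - G 0\<bar> \<le> w t * \<bar>en i - 0\<bar>" by (rule mvt_bound[OF dG bG])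
        then have "\<bar>G (en i) - G 0\<bar> / \<bar>en i\<bar> \<le> w t" using enz by (simp add: divide_le_eq)
        then show ?case unfolding G_def by (simp add: abs_divide)
      qed
    qed
    have quot: "integral\<^sup>L (lebesgue_on {0..T}) (\<lambda>t. (FL t (z t + q *\<^sub>R V t) - FL t (z t)) / q)
        = (integral\<^sup>L (lebesgue_on {0..T}) (\<lambda>t. FL t (z t + q *\<^sub>R V t)) - integral\<^sup>L (lebesgue_on {0..T}) (\<lambda>t. FL t (z t))) / q" for q
      using intF[of q] intF0 by simp
    define e1 where "e1 n = 1 / real (Suc n)" for n
    define e2 where "e2 n = - (1 / real (Suc n))" for n
    have e10: "e1 \<longlonglongrightarrow> 0" unfolding e1_def using LIMSEQ_inverse_real_of_nat by (simp add: inverse_eq_divide)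
    have e20: "e2 \<longlonglongrightarrow> 0" unfolding e2_def using tendsto_minus[OF e10] by (simp add: e1_def)
    have "0 \<le> integral\<^sup>L (lebesgue_on {0..T}) (\<lambda>t. Wf \<phi> t \<bullet> e)"
    proof (rule LIMSEQ_le_const[OF conv[OF e10]])
      show "\<forall>n. e1 n \<noteq> 0" unfolding e1_def by simp
      show "\<exists>N. \<forall>n\<ge>N. 0 \<le> integral\<^sup>L (lebesgue_on {0..T}) (\<lambda>t. (FL t (z t + e1 n *\<^sub>R V t) - FL t (z t)) / e1 n)"
      proof (intro exI[of _ 0] allI impI)
        fix n :: nat
        have "e1 n > 0" unfolding e1_def by simp
        then show "0 \<le> integral\<^sup>L (lebesgue_on {0..T}) (\<lambda>t. (FL t (z t + e1 n *\<^sub>R V t) - FL t (z t)) / e1 n)"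
          unfolding quot using Jle[of "e1 n"] by (intro divide_nonneg_pos) auto
      qed
    qed
    moreover have "integral\<^sup>L (lebesgue_on {0..T}) (\<lambda>t. Wf \<phi> t \<bullet> e) \<le> 0"
    proof (rule LIMSEQ_le_const2[OF conv[OF e20]])
      show "\<forall>n. e2 n \<noteq> 0" unfolding e2_def by simp
      show "\<exists>N. \<forall>n\<ge>N. integral\<^sup>L (lebesgue_on {0..T}) (\<lambda>t. (FL t (z t + e2 n *\<^sub>R V t) - FL t (z t)) / e2 n) \<le> 0"
      proof (intro exI[of _ 0] allI impI)
        fix n :: nat
        have "e2 n < 0" unfolding e2_def by simp
        then show "integral\<^sup>L (lebesgue_on {0..T}) (\<lambda>t. (FL t (z t + e2 n *\<^sub>R V t) - FL t (z t)) / e2 n) \<le> 0"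
          unfolding quot using Jle[of "e2 n"] by (intro divide_nonneg_neg) auto
      qed
    qed
    ultimately have "integral\<^sup>L (lebesgue_on {0..T}) (\<lambda>t. Wf \<phi> t \<bullet> e) = 0" by simp
    then show ?thesis using integral_inner_left[of e "lebesgue_on {0..T}" "Wf \<phi>"] Wi by simp
  qed
  show ?thesis using key[of "integral\<^sup>L (lebesgue_on {0..T}) (Wf \<phi>)"] by simp
qed

end


lemma shift_base:
  fixes g :: "real \<Rightarrow> 'a::euclidean_space"
  assumes g: "integrable (lebesgue_on {0..T}) g"
  shows "set_integrable lebesgue {-\<tau>..T-\<tau>} (\<lambda>s. g (s + \<tau>))"
    "integral\<^sup>L (lebesgue_on {0..T}) g = (LINT s:{-\<tau>..T-\<tau>}|lebesgue. g (s + \<tau>))"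
proof -
  define F where "F x = indicator {0..T} x *\<^sub>R g x" for x
  have Fi: "integrable lebesgue F" using g unfolding F_def by (subst (asm) integrable_restrict_space) auto
  have eq: "F (\<tau> + 1 * x) = indicator {-\<tau>..T-\<tau>} x *\<^sub>R g (x + \<tau>)" for x
  proof -
    have e1: "\<tau> + 1 * x = x + \<tau>" by simp
    have e2: "indicator {0..T} (x + \<tau>) = (indicator {-\<tau>..T-\<tau>} x :: real)"
      unfolding indicator_def by (simp add: algebra_simps)
    show ?thesis unfolding F_def e1 e2 ..
  qed
  have "integrable lebesgue (\<lambda>x. F (\<tau> + 1 * x))" by (rule lebesgue_integrable_real_affine[OF Fi]) simp
  then show "set_integrable lebesgue {-\<tau>..T-\<tau>} (\<lambda>s. g (s + \<tau>))"
    unfolding set_integrable_def eq .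
  have "integral\<^sup>L lebesgue F = \<bar>1::real\<bar> *\<^sub>R integral\<^sup>L lebesgue (\<lambda>x. F (\<tau> + 1 * x))"
    by (rule lebesgue_integral_real_affine) simp
  then have "integral\<^sup>L lebesgue F = (LINT s:{-\<tau>..T-\<tau>}|lebesgue. g (s + \<tau>))"
    unfolding set_lebesgue_integral_def eq by simp
  moreover have "integral\<^sup>L (lebesgue_on {0..T}) g = integral\<^sup>L lebesgue F"
    unfolding F_def by (subst integral_restrict_space) auto
  ultimately show "integral\<^sup>L (lebesgue_on {0..T}) g = (LINT s:{-\<tau>..T-\<tau>}|lebesgue. g (s + \<tau>))" by simp
qed

lemma shift_term:
  fixes G :: "real \<Rightarrow> 'a::euclidean_space"
  assumes i: "integrable (lebesgue_on {0..T}) (\<lambda>t. \<psi> (t - \<tau>) *\<^sub>R G t)"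
    and sp: "supp_in \<psi> c d" and ac: "a < c" and db: "d < b" and c0: "0 \<le> c + \<tau>" and dT: "d + \<tau> \<le> T"
  shows "set_integrable lebesgue {a<..<b} (\<lambda>s. \<psi> s *\<^sub>R G (s + \<tau>))"
    "integral\<^sup>L (lebesgue_on {0..T}) (\<lambda>t. \<psi> (t - \<tau>) *\<^sub>R G t) = (LINT s:{a<..<b}|lebesgue. \<psi> s *\<^sub>R G (s + \<tau>))"
proof -
  have nz: "s \<in> {-\<tau>..T-\<tau>} \<and> s \<in> {a<..<b}" if "\<psi> s *\<^sub>R G (s + \<tau>) \<noteq> 0" for s
  proof -
    have "\<psi> s \<noteq> 0" using that by auto
    then have "s \<in> {c..d}" using sp unfolding supp_in_def by blast
    then show ?thesis using ac db c0 dT by auto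
  qed
  have fe: "(\<lambda>s. \<psi> (s + \<tau> - \<tau>) *\<^sub>R G (s + \<tau>)) = (\<lambda>s. \<psi> s *\<^sub>R G (s + \<tau>))" by simp
  have s1: "set_integrable lebesgue {-\<tau>..T-\<tau>} (\<lambda>s. \<psi> s *\<^sub>R G (s + \<tau>))"
    using shift_base(1)[OF i, of \<tau>] unfolding fe .
  have s2: "integral\<^sup>L (lebesgue_on {0..T}) (\<lambda>t. \<psi> (t - \<tau>) *\<^sub>R G t) = (LINT s:{-\<tau>..T-\<tau>}|lebesgue. \<psi> s *\<^sub>R G (s + \<tau>))"
    using shift_base(2)[OF i, of \<tau>] unfolding fe .
  note q = supp_set_eq[of "\<lambda>s. \<psi> s *\<^sub>R G (s + \<tau>)" "{-\<tau>..T-\<tau>}" "{a<..<b}", OF nz]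
  show "set_integrable lebesgue {a<..<b} (\<lambda>s. \<psi> s *\<^sub>R G (s + \<tau>))"
    using s1 q(1) by simp
  show "integral\<^sup>L (lebesgue_on {0..T}) (\<lambda>t. \<psi> (t - \<tau>) *\<^sub>R G t) = (LINT s:{a<..<b}|lebesgue. \<psi> s *\<^sub>R G (s + \<tau>))"
    using s2 q(2) by simp
qed

lemma zero_term:
  fixes G :: "real \<Rightarrow> 'a::euclidean_space"
  assumes sp: "supp_in \<psi> c d" and cT: "T < c + \<tau>"
  shows "integral\<^sup>L (lebesgue_on {0..T}) (\<lambda>t. \<psi> (t - \<tau>) *\<^sub>R G t) = 0"
proof -
  have "integral\<^sup>L (lebesgue_on {0..T}) (\<lambda>t. \<psi> (t - \<tau>) *\<^sub>R G t) = integral\<^sup>L (lebesgue_on {0..T}) (\<lambda>t. 0::'a)"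
  proof (rule Bochner_Integration.integral_cong[OF refl])
    fix t assume "t \<in> space (lebesgue_on {0..T})"
    then have "t - \<tau> \<notin> {c..d}" using cT by auto
    then show "\<psi> (t - \<tau>) *\<^sub>R G t = 0" using sp unfolding supp_in_def by simp
  qed
  then show ?thesis by simp
qed

lemma seg_int:
  fixes g :: "real \<Rightarrow> 'a::euclidean_space" and a' b' c' d' \<tau> :: real
  assumes g: "integrable (lebesgue_on {0..T}) g" and "a' < c'" "d' < b'" "0 \<le> a' + \<tau>" "b' + \<tau> \<le> T"
  shows "set_integrable lebesgue {c'..d'} (\<lambda>s. g (s + \<tau>))"
  by (rule set_integrable_subset[OF shift_base(1)[OF g]]) (use assms in auto)

lemma lin4: fixes P Q X Y :: "'a::ab_group_add"
  assumes "P + Q + X + Y = 0" shows "X + Y = - (P + Q)"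
proof -
  have "X + Y + (P + Q) = 0" using assms by (simp add: add_ac)
  then show ?thesis by (rule eq_neg_iff_add_eq_0[THEN iffD2])
qed

lemma lin3: fixes P X Y :: "'a::ab_group_add"
  assumes "P + X + Y = 0" shows "X + Y = - P"
proof -
  have "X + Y + P = 0" using assms by (simp add: add_ac)
  then show ?thesis by (rule eq_neg_iff_add_eq_0[THEN iffD2])
qed

lemma lin2: fixes P X :: "'a::ab_group_add"
  assumes "P + X = 0" shows "X = - P"
proof -
  have "X + P = 0" using assms by (simp add: add_ac)
  then show ?thesis by (rule eq_neg_iff_add_eq_0[THEN iffD2])
qed

context EL begin

lemma EL_split:
  assumes sm: "smooth1 \<phi>" and sp: "supp_in \<phi> c d" and c0: "0 < c" and dT: "d < T"
  shows "integral\<^sup>L (lebesgue_on {0..T}) (\<lambda>t. \<phi> t *\<^sub>R LX2 t) + integral\<^sup>L (lebesgue_on {0..T}) (\<lambda>t. \<phi> (t - \<tau>1) *\<^sub>R LX3 t)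
       + integral\<^sup>L (lebesgue_on {0..T}) (\<lambda>t. deriv \<phi> t *\<^sub>R LX4 t) + integral\<^sup>L (lebesgue_on {0..T}) (\<lambda>t. deriv \<phi> (t - \<tau>2) *\<^sub>R LX5 t) = 0"
proof -
  note W = Wf_int[OF sm sp]
  have i12: "integrable (lebesgue_on {0..T}) (\<lambda>t. \<phi> t *\<^sub>R LX2 t + \<phi> (t - \<tau>1) *\<^sub>R LX3 t)"
    by (rule Bochner_Integration.integrable_add[OF W(1) W(2)])
  have i123: "integrable (lebesgue_on {0..T}) (\<lambda>t. \<phi> t *\<^sub>R LX2 t + \<phi> (t - \<tau>1) *\<^sub>R LX3 t + deriv \<phi> t *\<^sub>R LX4 t)"
    by (rule Bochner_Integration.integrable_add[OF i12 W(3)])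
  have "integral\<^sup>L (lebesgue_on {0..T}) (Wf \<phi>) = integral\<^sup>L (lebesgue_on {0..T}) (\<lambda>t. \<phi> t *\<^sub>R LX2 t) + integral\<^sup>L (lebesgue_on {0..T}) (\<lambda>t. \<phi> (t - \<tau>1) *\<^sub>R LX3 t)
       + integral\<^sup>L (lebesgue_on {0..T}) (\<lambda>t. deriv \<phi> t *\<^sub>R LX4 t) + integral\<^sup>L (lebesgue_on {0..T}) (\<lambda>t. deriv \<phi> (t - \<tau>2) *\<^sub>R LX5 t)"
    unfolding Wf_def
    by (simp only: Bochner_Integration.integral_add[OF i123 W(4)] Bochner_Integration.integral_add[OF i12 W(3)]
        Bochner_Integration.integral_add[OF W(1) W(2)])
  then show ?thesis using EL_var[OF assms] by simp
qed

lemma int_pieces: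
  assumes sm: "smooth1 \<phi>" and sp: "supp_in \<phi> c d"
  shows "integrable (lebesgue_on {0..T}) (\<lambda>t. \<phi> (t - 0) *\<^sub>R LX2 t)"
    "integrable (lebesgue_on {0..T}) (\<lambda>t. deriv \<phi> (t - 0) *\<^sub>R LX4 t)"
  using Wf_int[OF sm sp] by simp_all

theorem EL_main:
  shows "has_weak_deriv_on 0 (T - \<tau>1)
           (\<lambda>t. along L4 \<tau>1 \<tau>2 xb xbd t + along L5 \<tau>1 \<tau>2 xb xbd (t + \<tau>2))
           (\<lambda>t. along L2 \<tau>1 \<tau>2 xb xbd t + along L3 \<tau>1 \<tau>2 xb xbd (t + \<tau>1))
       \<and> has_weak_deriv_on (T - \<tau>1) (T - \<tau>2)
           (\<lambda>t. along L4 \<tau>1 \<tau>2 xb xbd t + along L5 \<tau>1 \<tau>2 xb xbd (t + \<tau>2))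
           (\<lambda>t. along L2 \<tau>1 \<tau>2 xb xbd t)
       \<and> has_weak_deriv_on (T - \<tau>2) T
           (along L4 \<tau>1 \<tau>2 xb xbd) (along L2 \<tau>1 \<tau>2 xb xbd)"
proof (intro conjI)
  have t: "0 < \<tau>2" "\<tau>2 < \<tau>1" "\<tau>1 < T" by (rule tau)+
  note I = int_LX
  show "has_weak_deriv_on 0 (T - \<tau>1) (\<lambda>t. LX4 t + LX5 (t + \<tau>2)) (\<lambda>t. LX2 t + LX3 (t + \<tau>1))"
    unfolding has_weak_deriv_on_def
  proof (intro conjI allI impI)
    fix c' d' :: real assume cd: "0 < c' \<and> d' < T - \<tau>1"
    have a: "set_integrable lebesgue {c'..d'} (\<lambda>s. LX4 (s + 0))" by (rule seg_int[OF I(3), of 0]) (use cd t in auto)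
    have b: "set_integrable lebesgue {c'..d'} (\<lambda>s. LX5 (s + \<tau>2))" by (rule seg_int[OF I(4), of 0]) (use cd t in auto)
    have c: "set_integrable lebesgue {c'..d'} (\<lambda>s. LX2 (s + 0))" by (rule seg_int[OF I(1), of 0]) (use cd t in auto)
    have d: "set_integrable lebesgue {c'..d'} (\<lambda>s. LX3 (s + \<tau>1))" by (rule seg_int[OF I(2), of 0]) (use cd t in auto)
    show "set_integrable lebesgue {c'..d'} (\<lambda>t. LX4 t + LX5 (t + \<tau>2))"
      using set_integral_add(1)[OF a b] by simp
    show "set_integrable lebesgue {c'..d'} (\<lambda>t. LX2 t + LX3 (t + \<tau>1))"
      using set_integral_add(1)[OF c d] by simp
  next
    fix \<phi> assume tf: "test_function 0 (T - \<tau>1) \<phi>"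
    have sm: "smooth1 \<phi>" by (rule test_smooth(1)[OF tf])
    obtain c d where cd: "0 < c" "c \<le> d" "d < T - \<tau>1" "supp_in \<phi> c d" using test_smooth(2)[OF tf] by blast
    have spd: "supp_in (deriv \<phi>) c d" by (rule supp_deriv[OF sm cd(4)])
    have p0: "0 \<le> c + 0" "d + 0 \<le> T" using cd t by linarith+
    have p2: "0 \<le> c + \<tau>2" "d + \<tau>2 \<le> T" using cd t by linarith+
    have p1: "0 \<le> c + \<tau>1" "d + \<tau>1 \<le> T" using cd t by linarith+
    note W = Wf_int[OF sm cd(4)]
    have W1: "integrable (lebesgue_on {0..T}) (\<lambda>t. \<phi> (t - 0) *\<^sub>R LX2 t)" using W(1) by simp
    have W3: "integrable (lebesgue_on {0..T}) (\<lambda>t. deriv \<phi> (t - 0) *\<^sub>R LX4 t)" using W(3) by simp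
    note s1 = shift_term[OF W1 cd(4), of 0 "T - \<tau>1"]
    note s2 = shift_term[OF W(2) cd(4), of 0 "T - \<tau>1"]
    note s3 = shift_term[OF W3 spd, of 0 "T - \<tau>1"]
    note s4 = shift_term[OF W(4) spd, of 0 "T - \<tau>1"]
    have h1: "set_integrable lebesgue {0<..<T - \<tau>1} (\<lambda>s. \<phi> s *\<^sub>R LX2 s)"
      "integral\<^sup>L (lebesgue_on {0..T}) (\<lambda>t. \<phi> t *\<^sub>R LX2 t) = (LINT s:{0<..<T - \<tau>1}|lebesgue. \<phi> s *\<^sub>R LX2 s)"
      using s1[OF cd(1) cd(3) p0] by simp_all
    have h2: "set_integrable lebesgue {0<..<T - \<tau>1} (\<lambda>s. \<phi> s *\<^sub>R LX3 (s + \<tau>1))"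
      "integral\<^sup>L (lebesgue_on {0..T}) (\<lambda>t. \<phi> (t - \<tau>1) *\<^sub>R LX3 t) = (LINT s:{0<..<T - \<tau>1}|lebesgue. \<phi> s *\<^sub>R LX3 (s + \<tau>1))"
      using s2[OF cd(1) cd(3) p1] by simp_all
    have h3: "set_integrable lebesgue {0<..<T - \<tau>1} (\<lambda>s. deriv \<phi> s *\<^sub>R LX4 s)"
      "integral\<^sup>L (lebesgue_on {0..T}) (\<lambda>t. deriv \<phi> t *\<^sub>R LX4 t) = (LINT s:{0<..<T - \<tau>1}|lebesgue. deriv \<phi> s *\<^sub>R LX4 s)"
      using s3[OF cd(1) cd(3) p0] by simp_all
    have h4: "set_integrable lebesgue {0<..<T - \<tau>1} (\<lambda>s. deriv \<phi> s *\<^sub>R LX5 (s + \<tau>2))"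
      "integral\<^sup>L (lebesgue_on {0..T}) (\<lambda>t. deriv \<phi> (t - \<tau>2) *\<^sub>R LX5 t) = (LINT s:{0<..<T - \<tau>1}|lebesgue. deriv \<phi> s *\<^sub>R LX5 (s + \<tau>2))"
      using s4[OF cd(1) cd(3) p2] by simp_all
    have E: "(LINT s:{0<..<T - \<tau>1}|lebesgue. \<phi> s *\<^sub>R LX2 s) + (LINT s:{0<..<T - \<tau>1}|lebesgue. \<phi> s *\<^sub>R LX3 (s + \<tau>1))
      + (LINT s:{0<..<T - \<tau>1}|lebesgue. deriv \<phi> s *\<^sub>R LX4 s) + (LINT s:{0<..<T - \<tau>1}|lebesgue. deriv \<phi> s *\<^sub>R LX5 (s + \<tau>2)) = 0"
      using EL_split[OF sm cd(4) cd(1)] cd t h1(2) h2(2) h3(2) h4(2) by simp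
    have A: "(LINT t:{0<..<T - \<tau>1}|lebesgue. deriv \<phi> t *\<^sub>R (LX4 t + LX5 (t + \<tau>2)))
        = (LINT s:{0<..<T - \<tau>1}|lebesgue. deriv \<phi> s *\<^sub>R LX4 s) + (LINT s:{0<..<T - \<tau>1}|lebesgue. deriv \<phi> s *\<^sub>R LX5 (s + \<tau>2))"
      using set_integral_add(2)[OF h3(1) h4(1)] by (simp add: scaleR_add_right)
    have B: "(LINT t:{0<..<T - \<tau>1}|lebesgue. \<phi> t *\<^sub>R (LX2 t + LX3 (t + \<tau>1)))
        = (LINT s:{0<..<T - \<tau>1}|lebesgue. \<phi> s *\<^sub>R LX2 s) + (LINT s:{0<..<T - \<tau>1}|lebesgue. \<phi> s *\<^sub>R LX3 (s + \<tau>1))"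
      using set_integral_add(2)[OF h1(1) h2(1)] by (simp add: scaleR_add_right)
    show "(LINT t:{0<..<T - \<tau>1}|lebesgue. deriv \<phi> t *\<^sub>R (LX4 t + LX5 (t + \<tau>2)))
        = - (LINT t:{0<..<T - \<tau>1}|lebesgue. \<phi> t *\<^sub>R (LX2 t + LX3 (t + \<tau>1)))"
      unfolding A B by (rule lin4[OF E])
  qed
  show "has_weak_deriv_on (T - \<tau>1) (T - \<tau>2) (\<lambda>t. LX4 t + LX5 (t + \<tau>2)) LX2"
    unfolding has_weak_deriv_on_def
  proof (intro conjI allI impI)
    fix c' d' :: real assume cd: "T - \<tau>1 < c' \<and> d' < T - \<tau>2"
    have a: "set_integrable lebesgue {c'..d'} (\<lambda>s. LX4 (s + 0))" by (rule seg_int[OF I(3), of "T - \<tau>1"]) (use cd t in auto)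
    have b: "set_integrable lebesgue {c'..d'} (\<lambda>s. LX5 (s + \<tau>2))" by (rule seg_int[OF I(4), of "T - \<tau>1"]) (use cd t in auto)
    have c: "set_integrable lebesgue {c'..d'} (\<lambda>s. LX2 (s + 0))" by (rule seg_int[OF I(1), of "T - \<tau>1"]) (use cd t in auto)
    show "set_integrable lebesgue {c'..d'} (\<lambda>t. LX4 t + LX5 (t + \<tau>2))"
      using set_integral_add(1)[OF a b] by simp
    show "set_integrable lebesgue {c'..d'} LX2"
      using c by simp
  next
    fix \<phi> assume tf: "test_function (T - \<tau>1) (T - \<tau>2) \<phi>"
    have sm: "smooth1 \<phi>" by (rule test_smooth(1)[OF tf])
    obtain c d where cd: "T - \<tau>1 < c" "c \<le> d" "d < T - \<tau>2" "supp_in \<phi> c d" using test_smooth(2)[OF tf] by blast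
    have c0: "0 < c" using cd t by simp
    have spd: "supp_in (deriv \<phi>) c d" by (rule supp_deriv[OF sm cd(4)])
    have p0: "0 \<le> c + 0" "d + 0 \<le> T" using cd t by linarith+
    have p2: "0 \<le> c + \<tau>2" "d + \<tau>2 \<le> T" using cd t by linarith+
    note W = Wf_int[OF sm cd(4)]
    have W1: "integrable (lebesgue_on {0..T}) (\<lambda>t. \<phi> (t - 0) *\<^sub>R LX2 t)" using W(1) by simp
    have W3: "integrable (lebesgue_on {0..T}) (\<lambda>t. deriv \<phi> (t - 0) *\<^sub>R LX4 t)" using W(3) by simp
    note s1 = shift_term[OF W1 cd(4), of "T - \<tau>1" "T - \<tau>2"]
    note s3 = shift_term[OF W3 spd, of "T - \<tau>1" "T - \<tau>2"]
    note s4 = shift_term[OF W(4) spd, of "T - \<tau>1" "T - \<tau>2"]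
    have h1: "set_integrable lebesgue {T - \<tau>1<..<T - \<tau>2} (\<lambda>s. \<phi> s *\<^sub>R LX2 s)"
      "integral\<^sup>L (lebesgue_on {0..T}) (\<lambda>t. \<phi> t *\<^sub>R LX2 t) = (LINT s:{T - \<tau>1<..<T - \<tau>2}|lebesgue. \<phi> s *\<^sub>R LX2 s)"
      using s1[OF cd(1) cd(3) p0] by simp_all
    have h2: "integral\<^sup>L (lebesgue_on {0..T}) (\<lambda>t. \<phi> (t - \<tau>1) *\<^sub>R LX3 t) = 0"
      by (rule zero_term[OF cd(4)]) (use cd t in auto)
    have h3: "set_integrable lebesgue {T - \<tau>1<..<T - \<tau>2} (\<lambda>s. deriv \<phi> s *\<^sub>R LX4 s)"
      "integral\<^sup>L (lebesgue_on {0..T}) (\<lambda>t. deriv \<phi> t *\<^sub>R LX4 t) = (LINT s:{T - \<tau>1<..<T - \<tau>2}|lebesgue. deriv \<phi> s *\<^sub>R LX4 s)"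
      using s3[OF cd(1) cd(3) p0] by simp_all
    have h4: "set_integrable lebesgue {T - \<tau>1<..<T - \<tau>2} (\<lambda>s. deriv \<phi> s *\<^sub>R LX5 (s + \<tau>2))"
      "integral\<^sup>L (lebesgue_on {0..T}) (\<lambda>t. deriv \<phi> (t - \<tau>2) *\<^sub>R LX5 t) = (LINT s:{T - \<tau>1<..<T - \<tau>2}|lebesgue. deriv \<phi> s *\<^sub>R LX5 (s + \<tau>2))"
      using s4[OF cd(1) cd(3) p2] by simp_all
    have E: "(LINT s:{T - \<tau>1<..<T - \<tau>2}|lebesgue. \<phi> s *\<^sub>R LX2 s)
      + (LINT s:{T - \<tau>1<..<T - \<tau>2}|lebesgue. deriv \<phi> s *\<^sub>R LX4 s) + (LINT s:{T - \<tau>1<..<T - \<tau>2}|lebesgue. deriv \<phi> s *\<^sub>R LX5 (s + \<tau>2)) = 0"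
      using EL_split[OF sm cd(4) c0] cd t h1(2) h2 h3(2) h4(2) by simp
    have A: "(LINT t:{T - \<tau>1<..<T - \<tau>2}|lebesgue. deriv \<phi> t *\<^sub>R (LX4 t + LX5 (t + \<tau>2)))
        = (LINT s:{T - \<tau>1<..<T - \<tau>2}|lebesgue. deriv \<phi> s *\<^sub>R LX4 s) + (LINT s:{T - \<tau>1<..<T - \<tau>2}|lebesgue. deriv \<phi> s *\<^sub>R LX5 (s + \<tau>2))"
      using set_integral_add(2)[OF h3(1) h4(1)] by (simp add: scaleR_add_right)
    show "(LINT t:{T - \<tau>1<..<T - \<tau>2}|lebesgue. deriv \<phi> t *\<^sub>R (LX4 t + LX5 (t + \<tau>2)))
        = - (LINT t:{T - \<tau>1<..<T - \<tau>2}|lebesgue. \<phi> t *\<^sub>R LX2 t)"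
      unfolding A by (rule lin3[OF E])
  qed
  show "has_weak_deriv_on (T - \<tau>2) T LX4 LX2"
    unfolding has_weak_deriv_on_def
  proof (intro conjI allI impI)
    fix c' d' :: real assume cd: "T - \<tau>2 < c' \<and> d' < T"
    have a: "set_integrable lebesgue {c'..d'} (\<lambda>s. LX4 (s + 0))" by (rule seg_int[OF I(3), of "T - \<tau>2"]) (use cd t in auto)
    have c: "set_integrable lebesgue {c'..d'} (\<lambda>s. LX2 (s + 0))" by (rule seg_int[OF I(1), of "T - \<tau>2"]) (use cd t in auto)
    show "set_integrable lebesgue {c'..d'} LX4" using a by simp
    show "set_integrable lebesgue {c'..d'} LX2" using c by simp
  next
    fix \<phi> assume tf: "test_function (T - \<tau>2) T \<phi>"
    have sm: "smooth1 \<phi>" by (rule test_smooth(1)[OF tf])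
    obtain c d where cd: "T - \<tau>2 < c" "c \<le> d" "d < T" "supp_in \<phi> c d" using test_smooth(2)[OF tf] by blast
    have c0: "0 < c" using cd t by simp
    have spd: "supp_in (deriv \<phi>) c d" by (rule supp_deriv[OF sm cd(4)])
    have p0: "0 \<le> c + 0" "d + 0 \<le> T" using cd t by linarith+
    note W = Wf_int[OF sm cd(4)]
    have W1: "integrable (lebesgue_on {0..T}) (\<lambda>t. \<phi> (t - 0) *\<^sub>R LX2 t)" using W(1) by simp
    have W3: "integrable (lebesgue_on {0..T}) (\<lambda>t. deriv \<phi> (t - 0) *\<^sub>R LX4 t)" using W(3) by simp
    note s1 = shift_term[OF W1 cd(4), of "T - \<tau>2" "T"]
    note s3 = shift_term[OF W3 spd, of "T - \<tau>2" "T"]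
    have h1: "integral\<^sup>L (lebesgue_on {0..T}) (\<lambda>t. \<phi> t *\<^sub>R LX2 t) = (LINT s:{T - \<tau>2<..<T}|lebesgue. \<phi> s *\<^sub>R LX2 s)"
      using s1[OF cd(1) cd(3) p0] by simp_all
    have h2: "integral\<^sup>L (lebesgue_on {0..T}) (\<lambda>t. \<phi> (t - \<tau>1) *\<^sub>R LX3 t) = 0"
      by (rule zero_term[OF cd(4)]) (use cd t in auto)
    have h3: "integral\<^sup>L (lebesgue_on {0..T}) (\<lambda>t. deriv \<phi> t *\<^sub>R LX4 t) = (LINT s:{T - \<tau>2<..<T}|lebesgue. deriv \<phi> s *\<^sub>R LX4 s)"
      using s3[OF cd(1) cd(3) p0] by simp_all
    have h4: "integral\<^sup>L (lebesgue_on {0..T}) (\<lambda>t. deriv \<phi> (t - \<tau>2) *\<^sub>R LX5 t) = 0"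
      by (rule zero_term[OF spd]) (use cd t in auto)
    show "(LINT t:{T - \<tau>2<..<T}|lebesgue. deriv \<phi> t *\<^sub>R LX4 t) = - (LINT t:{T - \<tau>2<..<T}|lebesgue. \<phi> t *\<^sub>R LX2 t)"
    proof (rule lin2)
      show "(LINT t:{T - \<tau>2<..<T}|lebesgue. \<phi> t *\<^sub>R LX2 t) + (LINT t:{T - \<tau>2<..<T}|lebesgue. deriv \<phi> t *\<^sub>R LX4 t) = 0"
        using EL_split[OF sm cd(4) c0] cd t h1 h2 h3 h4 by simp
    qed
  qed
qed

end


theorem theorem1:
  fixes L :: "real \<Rightarrow> real^'n \<Rightarrow> real^'n \<Rightarrow> real^'n \<Rightarrow> real^'n \<Rightarrow> real"
    and L2 L3 L4 L5 :: "real \<Rightarrow> real^'n \<Rightarrow> real^'n \<Rightarrow> real^'n \<Rightarrow> real^'n \<Rightarrow> real^'n"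
    and \<theta>1 \<theta>2 :: "real \<Rightarrow> real^'n" and \<alpha> :: "real^'n"
    and T \<tau>1 \<tau>2 :: real
    and xb xbd :: "real \<Rightarrow> real^'n"
  assumes tau: "0 < \<tau>2" "\<tau>2 < \<tau>1" "\<tau>1 < T"
    and theta: "\<theta>1 piecewise_C1_differentiable_on {-\<tau>1..-\<tau>2}"
               "\<theta>2 piecewise_C1_differentiable_on {-\<tau>2..0}"
    \<comment> \<open>(A1): C^1 in (a, abar, b, bbar) for a.e. t, with partial derivatives L2..L5\<close>
    and A1_C1: "AE t in lebesgue_on {0..T}.
        (\<forall>a ab b bb. ((\<lambda>(u,v,w,s). L t u v w s) has_derivative
            (\<lambda>(h1,h2,h3,h4). L2 t a ab b bb \<bullet> h1 + L3 t a ab b bb \<bullet> h2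
                              + L4 t a ab b bb \<bullet> h3 + L5 t a ab b bb \<bullet> h4))
            (at (a,ab,b,bb)))
        \<and> continuous_on UNIV (\<lambda>(a,ab,b,bb). L2 t a ab b bb)
        \<and> continuous_on UNIV (\<lambda>(a,ab,b,bb). L3 t a ab b bb)
        \<and> continuous_on UNIV (\<lambda>(a,ab,b,bb). L4 t a ab b bb)
        \<and> continuous_on UNIV (\<lambda>(a,ab,b,bb). L5 t a ab b bb)"
    \<comment> \<open>(A1): measurable in t\<close>
    and A1_meas: "\<And>a ab b bb. (\<lambda>t. L t a ab b bb) \<in> borel_measurable (lebesgue_on {0..T})"
    \<comment> \<open>(A2)\<close>
    and A2: "\<exists>\<gamma>1 \<gamma>2 \<gamma>3 \<gamma>4 \<gamma>5 :: real \<Rightarrow> real.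
        L2_on {0..T} \<gamma>1 \<and> L2_on {0..T} \<gamma>2 \<and> L2_on {0..T} \<gamma>3 \<and> L2_on {0..T} \<gamma>4 \<and> L2_on {0..T} \<gamma>5
        \<and> (\<forall>t\<in>{0..T}. \<gamma>1 t \<ge> 0 \<and> \<gamma>2 t \<ge> 0 \<and> \<gamma>3 t \<ge> 0 \<and> \<gamma>4 t \<ge> 0 \<and> \<gamma>5 t \<ge> 0)
        \<and> (AE t in lebesgue_on {0..T}. \<forall>a ab b bb.
              \<bar>L t a ab b bb\<bar> \<le> \<gamma>1 t \<and> norm (L2 t a ab b bb) \<le> \<gamma>2 t
              \<and> norm (L3 t a ab b bb) \<le> \<gamma>3 t \<and> norm (L4 t a ab b bb) \<le> \<gamma>4 t
              \<and> norm (L5 t a ab b bb) \<le> \<gamma>5 t)"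
    \<comment> \<open>xb is a minimizer of J over D; xbd is its weak derivative\<close>
    and xb_in: "xb \<in> Dset \<tau>1 \<tau>2 T \<theta>1 \<theta>2 \<alpha>"
    and xbd: "is_xdot \<tau>2 T xb xbd"
    and minimal: "\<And>y yd. y \<in> Dset \<tau>1 \<tau>2 T \<theta>1 \<theta>2 \<alpha> \<Longrightarrow> is_xdot \<tau>2 T y yd \<Longrightarrow>
                    Jfun L \<tau>1 \<tau>2 T xb xbd \<le> Jfun L \<tau>1 \<tau>2 T y yd"
  shows "has_weak_deriv_on 0 (T - \<tau>1)
           (\<lambda>t. along L4 \<tau>1 \<tau>2 xb xbd t + along L5 \<tau>1 \<tau>2 xb xbd (t + \<tau>2))
           (\<lambda>t. along L2 \<tau>1 \<tau>2 xb xbd t + along L3 \<tau>1 \<tau>2 xb xbd (t + \<tau>1))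
       \<and> has_weak_deriv_on (T - \<tau>1) (T - \<tau>2)
           (\<lambda>t. along L4 \<tau>1 \<tau>2 xb xbd t + along L5 \<tau>1 \<tau>2 xb xbd (t + \<tau>2))
           (\<lambda>t. along L2 \<tau>1 \<tau>2 xb xbd t)
       \<and> has_weak_deriv_on (T - \<tau>2) T
           (along L4 \<tau>1 \<tau>2 xb xbd) (along L2 \<tau>1 \<tau>2 xb xbd)"
  proof -
  from A2 obtain \<gamma>1 \<gamma>2 \<gamma>3 \<gamma>4 \<gamma>5 :: "real \<Rightarrow> real" where
    g1: "L2_on {0..T} \<gamma>1" and g2: "L2_on {0..T} \<gamma>2" and g3: "L2_on {0..T} \<gamma>3"
    and g4: "L2_on {0..T} \<gamma>4" and g5: "L2_on {0..T} \<gamma>5"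
    and g6: "\<forall>t\<in>{0..T}. \<gamma>1 t \<ge> 0 \<and> \<gamma>2 t \<ge> 0 \<and> \<gamma>3 t \<ge> 0 \<and> \<gamma>4 t \<ge> 0 \<and> \<gamma>5 t \<ge> 0"
    and g7: "AE t in lebesgue_on {0..T}. \<forall>a ab b bb.
              \<bar>L t a ab b bb\<bar> \<le> \<gamma>1 t \<and> norm (L2 t a ab b bb) \<le> \<gamma>2 t
              \<and> norm (L3 t a ab b bb) \<le> \<gamma>3 t \<and> norm (L4 t a ab b bb) \<le> \<gamma>4 t
              \<and> norm (L5 t a ab b bb) \<le> \<gamma>5 t"
    by blast
  interpret E: EL L L2 L3 L4 L5 \<theta>1 \<theta>2 \<alpha> T \<tau>1 \<tau>2 xb xbd \<gamma>1 \<gamma>2 \<gamma>3 \<gamma>4 \<gamma>5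
    by (rule EL.intro[OF tau A1_C1 A1_meas g1 g2 g3 g4 g5 g6 g7 xb_in xbd minimal])
  show ?thesis by (rule E.EL_main)
qed

end
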